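(* Let $\Lambda:=\{(x,y)\in\mathbb{R}^2\mid -1<y<x<1\}$ and let $W$ be a positive weight function on $\Lambda$ with $W(x,y)=W(-y,-x)$. Define $V$ on $\Lambda$ by $$V\big(xy+(1-x^2)^{1/2}(1-y^2)^{1/2},\,xy-(1-x^2)^{1/2}(1-y^2)^{1/2}\big)=W(x,y).$$ Let $P_{n,k}$ be dominance orthogonal symmetric polynomials on $\Lambda$ with respect to the measure $W(x,y)(x-y)\,dx\,dy$, and let $Q_{n,k}$, $R_{n,k}$ be dominance orthogonal symmetric polynomials on $\Lambda$ with respect to $(1+x)^{-1/2}(1+y)^{-1/2}V(x,y)(x-y)\,dx\,dy$ and $(1+x)^{1/2}(1+y)^{1/2}V(x,y)(x-y)\,dx\,dy$, respectively (all relevant moments assumed finite). Assume $P_{n,k}(1,1)\ne0$, $Q_{n,k}(1,1)\ne0$, $R_{n,k}(1,1)\ne0$ for all $n\ge k\ge 0$. Then for all $n\ge k\ge0$ and $(x,y)\in\Lambda$, writing $x_\pm:=xy\pm(1-x^2)^{1/2}(1-y^2)^{1/2}$, $$\frac{Q_{n,k}(x_+,x_-)}{Q_{n,k}(1,1)}=\frac{P_{n+k,n-k}(x,y)}{P_{n+k,n-k}(1,1)},\qquad \frac{(x+y)\,R_{n,k}(x_+,x_-)}{2R_{n,k}(1,1)}=\frac{P_{n+k+1,n-k}(x,y)}{P_{n+k+1,n-k}(1,1)}.$$ Equivalently, with $x=\cos\theta_1$, $y=\cos\theta_2$: $Q_{n,k}(\cos(\theta_1-\theta_2),\cos(\theta_1+\theta_2))/Q_{n,k}(1,1)=P_{n+k,n-k}(\cos\theta_1,\cos\theta_2)/P_{n+k,n-k}(1,1)$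 and $(\cos\theta_1+\cos\theta_2)R_{n,k}(\cos(\theta_1-\theta_2),\cos(\theta_1+\theta_2))/(2R_{n,k}(1,1))=P_{n+k+1,n-k}(\cos\theta_1,\cos\theta_2)/P_{n+k+1,n-k}(1,1)$.
   Context: Pairs $(m,l)$ of integers with $m\ge l\ge0$ carry the dominance partial order $(m,l)\le(n,k)$ iff $m\le n$ and $m+l\le n+k$; $(m,l)<(n,k)$ means $\le$ and $\ne$. A family of dominance orthogonal symmetric polynomials on $\Lambda$ with respect to a measure $d\mu$ consists of symmetric polynomials $P_{n,k}(x,y)=\sum_{(m,l)\le(n,k)}b_{m,l}(x^my^l+x^ly^m)$ with $b_{n,k}\ne0$ such that $\int_\Lambda P_{n,k}(x,y)(x^my^l+x^ly^m)\,d\mu(x,y)=0$ whenever $(m,l)<(n,k)$. *)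

theory Defs
  imports "HOL-Analysis.Analysis"
begin

definition Lambda :: "(real \<times> real) set" where
  "Lambda = {(x, y). -1 < y \<and> y < x \<and> x < 1}"

definition dom_le :: "nat \<times> nat \<Rightarrow> nat \<times> nat \<Rightarrow> bool" where
  "dom_le a b \<longleftrightarrow> fst a \<le> fst b \<and> fst a + snd a \<le> fst b + snd b"

definition dom_lt :: "nat \<times> nat \<Rightarrow> nat \<times> nat \<Rightarrow> bool" where
  "dom_lt a b \<longleftrightarrow> dom_le a b \<and> a \<noteq> b"

definition sym_mono :: "nat \<Rightarrow> nat \<Rightarrow> real \<Rightarrow> real \<Rightarrow> real" where
  "sym_mono m l x y = x ^ m * y ^ l + x ^ l * y ^ m"

definition moments_finite :: "(real \<Rightarrow> real \<Rightarrow> real) \<Rightarrow> bool" where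
  "moments_finite w \<longleftrightarrow>
     (\<forall>a b :: nat. set_integrable lborel Lambda
        (\<lambda>z. fst z ^ a * snd z ^ b * w (fst z) (snd z)))"

text \<open>P is a family of dominance orthogonal symmetric polynomials on Lambda with
  respect to the measure w(x,y) dx dy (w is the full density, e.g. W(x,y)(x-y)).\<close>
definition dominance_orthogonal ::
  "(real \<Rightarrow> real \<Rightarrow> real) \<Rightarrow> (nat \<Rightarrow> nat \<Rightarrow> real \<Rightarrow> real \<Rightarrow> real) \<Rightarrow> bool" where
  "dominance_orthogonal w P \<longleftrightarrow>
     (\<forall>n k. k \<le> n \<longrightarrow>
        (\<exists>b :: nat \<times> nat \<Rightarrow> real. b (n, k) \<noteq> 0 \<and>
           (\<forall>x y. P n k x y =
              (\<Sum>(m, l) \<in> {(m, l). l \<le> m \<and> dom_le (m, l) (n, k)}.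
                  b (m, l) * sym_mono m l x y))) \<and>
        (\<forall>m l. l \<le> m \<and> dom_lt (m, l) (n, k) \<longrightarrow>
           (LINT z:Lambda|lborel. P n k (fst z) (snd z) * sym_mono m l (fst z) (snd z)
                                   * w (fst z) (snd z)) = 0))"

end

theory Submission
  imports Defs
begin

definition e2 :: "real \<times> real \<Rightarrow> real^2" where "e2 z = fst z *\<^sub>R axis 1 1 + snd z *\<^sub>R axis 2 1"
definition d2 :: "real^2 \<Rightarrow> real \<times> real" where "d2 w = (w$1, w$2)"

lemma e2_nth[simp]: "e2 z $ 1 = fst z" "e2 z $ 2 = snd z"
  by (simp_all add: e2_def axis_def)
lemma d2e2[simp]: "d2 (e2 z) = z" by (simp add: d2_def)
lemma e2d2[simp]: "e2 (d2 w) = w"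
  by (simp add: d2_def vec_eq_iff forall_2)

lemma e2_meas[measurable]: "e2 \<in> borel_measurable borel"
  unfolding e2_def by (intro borel_measurable_continuous_onI continuous_intros) 
lemma d2_meas[measurable]: "d2 \<in> borel_measurable borel"
  unfolding d2_def by (intro borel_measurable_continuous_onI continuous_intros) 

lemma Basis_2: "(Basis :: (real^2) set) = {axis 1 1, axis 2 1}"
  by (auto simp: Basis_vec_def UNIV_2)

lemma axis12_ne: "axis 1 (1::real) \<noteq> (axis 2 1 :: real^2)"
  by (simp add: axis_eq_axis)

lemma distr_e2: "distr lborel borel e2 = lborel"
proof (rule lborel_eqI[symmetric])
  fix l u :: "real^2" assume le: "\<And>b. b \<in> Basis \<Longrightarrow> l \<bullet> b \<le> u \<bullet> b"
  have "e2 -` box l u = box (l$1, l$2) (u$1,u$2)"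
    by (auto simp: mem_box Basis_prod_def Basis_2 inner_axis)
  then show "emeasure (distr lborel borel e2) (box l u) = (\<Prod>b\<in>Basis. (u - l) \<bullet> b)"
    using le[of "axis 1 1"] le[of "axis 2 1"] axis12_ne by (auto simp add: emeasure_distr emeasure_lborel_box_eq Basis_prod_def Basis_2 inner_axis)
qed simp

lemma distr_d2: "distr lborel borel d2 = lborel"
proof -
  have "distr lborel borel d2 = distr (distr lborel borel e2) borel d2"
    by (simp add: distr_e2)
  also have "\<dots> = distr lborel borel (d2 \<circ> e2)"
    by (rule distr_distr) auto
  also have "\<dots> = distr lborel borel (\<lambda>x. x)"
    by (simp add: o_def)
  also have "\<dots> = lborel" by (rule distr_id2) simp
  finally show ?thesis .
qed

lemma integrable_d2:
  fixes H :: "real \<times> real \<Rightarrow> real"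
  assumes "integrable lborel H"
  shows "integrable lborel (\<lambda>w. H (d2 w))" "integral\<^sup>L lborel (\<lambda>w. H (d2 w)) = integral\<^sup>L lborel H"
proof -
  have m: "H \<in> borel_measurable borel" using borel_measurable_integrable[OF assms] by simp
  have "integrable (distr lborel borel d2) H" using assms by (simp add: distr_d2)
  then show "integrable lborel (\<lambda>w. H (d2 w))"
    using integrable_distr_eq[of d2 lborel borel H] m by simp
  have "integral\<^sup>L (distr lborel borel d2) H = integral\<^sup>L lborel (\<lambda>w. H (d2 w))"
    by (rule integral_distr) (use m in auto)
  then show "integral\<^sup>L lborel (\<lambda>w. H (d2 w)) = integral\<^sup>L lborel H" by (simp add: distr_d2)
qed

lemma integrable_e2:
  fixes G :: "real^2 \<Rightarrow> real"
  assumes "integrable lborel G"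
  shows "integrable lborel (\<lambda>z. G (e2 z))" "integral\<^sup>L lborel (\<lambda>z. G (e2 z)) = integral\<^sup>L lborel G"
proof -
  have m: "G \<in> borel_measurable borel" using borel_measurable_integrable[OF assms] by simp
  have "integrable (distr lborel borel e2) G" using assms by (simp add: distr_e2)
  then show "integrable lborel (\<lambda>z. G (e2 z))"
    using integrable_distr_eq[of e2 lborel borel G] m by simp
  have "integral\<^sup>L (distr lborel borel e2) G = integral\<^sup>L lborel (\<lambda>z. G (e2 z))"
    by (rule integral_distr) (use m in auto)
  then show "integral\<^sup>L lborel (\<lambda>z. G (e2 z)) = integral\<^sup>L lborel G" by (simp add: distr_e2)
qed

lemma mem_e2_image: "w \<in> e2 ` S \<longleftrightarrow> d2 w \<in> S"
  by (metis d2e2 e2d2 image_iff)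

lemma set_integrable_to2:
  fixes f :: "real \<times> real \<Rightarrow> real"
  assumes "set_integrable lborel S f"
  shows "set_integrable lborel (e2 ` S) (\<lambda>w. f (d2 w))"
    "(LINT w:(e2 ` S)|lborel. f (d2 w)) = (LINT z:S|lborel. f z)"
proof -
  have eq: "(\<lambda>w. indicator (e2 ` S) w *\<^sub>R f (d2 w)) = (\<lambda>w. (\<lambda>z. indicator S z *\<^sub>R f z) (d2 w))"
    by (auto simp: indicator_def mem_e2_image)
  show "set_integrable lborel (e2 ` S) (\<lambda>w. f (d2 w))"
    using assms unfolding set_integrable_def eq by (rule integrable_d2)
  show "(LINT w:(e2 ` S)|lborel. f (d2 w)) = (LINT z:S|lborel. f z)"
    using assms unfolding set_integrable_def set_lebesgue_integral_def eq by (rule integrable_d2)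
qed

lemma set_integrable_from2:
  fixes g :: "real^2 \<Rightarrow> real"
  assumes "set_integrable lborel (e2 ` S) g"
  shows "set_integrable lborel S (\<lambda>z. g (e2 z))"
    "(LINT z:S|lborel. g (e2 z)) = (LINT w:(e2 ` S)|lborel. g w)"
proof -
  have eq: "(\<lambda>z. indicator S z *\<^sub>R g (e2 z)) = (\<lambda>z. (\<lambda>w. indicator (e2 ` S) w *\<^sub>R g w) (e2 z))"
    by (auto simp: indicator_def mem_e2_image)
  show "set_integrable lborel S (\<lambda>z. g (e2 z))"
    using assms unfolding set_integrable_def eq by (rule integrable_e2)
  show "(LINT z:S|lborel. g (e2 z)) = (LINT w:(e2 ` S)|lborel. g w)"
    using assms unfolding set_integrable_def set_lebesgue_integral_def eq by (rule integrable_e2)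
qed

lemma alg_g1: "a\<noteq>0 \<Longrightarrow> b\<noteq>0 \<Longrightarrow> c\<noteq>0 \<Longrightarrow> d\<noteq>0 \<Longrightarrow>(e::real)*a*h2/(4*b) + e*h1*b/(4*a) + (-(c*h2/(4*d)) - h1*d/(4*c)) = (e*b/(2*a) - d/(2*c))*h1/2 + (e*a/(2*b) - c/(2*d))*h2/2"
  by (simp add: field_simps)
lemma alg_g2: "a\<noteq>0 \<Longrightarrow> b\<noteq>0 \<Longrightarrow> c\<noteq>0 \<Longrightarrow> d\<noteq>0 \<Longrightarrow>(e::real)*a*h2/(4*b) + e*h1*b/(4*a) - (-(c*h2/(4*d)) - h1*d/(4*c)) = (e*b/(2*a) + d/(2*c))*h1/2 + (e*a/(2*b) + c/(2*d))*h2/2"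
  by (simp add: field_simps)

definition PhX :: "real \<Rightarrow> real \<Rightarrow> real \<Rightarrow> real" where
  "PhX \<epsilon> u v = (\<epsilon> * sqrt (1+u) * sqrt (1+v) + sqrt (1-u) * sqrt (1-v)) / 2"
definition PhY :: "real \<Rightarrow> real \<Rightarrow> real \<Rightarrow> real" where
  "PhY \<epsilon> u v = (\<epsilon> * sqrt (1+u) * sqrt (1+v) - sqrt (1-u) * sqrt (1-v)) / 2"

definition g2 :: "real \<Rightarrow> real^2 \<Rightarrow> real^2" where
  "g2 \<epsilon> w = PhX \<epsilon> (w$1) (w$2) *\<^sub>R axis 1 1 + PhY \<epsilon> (w$1) (w$2) *\<^sub>R axis 2 1"

lemma g2_der:
  assumes "-1 < w$2" "w$2 < w$1" "w$1 < 1"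
  shows "(g2 \<epsilon> has_derivative (\<lambda>h. 
     ((\<epsilon> * (1/(2* sqrt(1+w$1))) * sqrt(1+w$2) - (1/(2* sqrt(1-w$1))) * sqrt(1-w$2))/2 * h$1 +
      (\<epsilon> * sqrt(1+w$1) * (1/(2* sqrt(1+w$2))) - sqrt(1-w$1) * (1/(2* sqrt(1-w$2))))/2 * h$2) *\<^sub>R axis 1 1 +
     ((\<epsilon> * (1/(2* sqrt(1+w$1))) * sqrt(1+w$2) + (1/(2* sqrt(1-w$1))) * sqrt(1-w$2))/2 * h$1 +
      (\<epsilon> * sqrt(1+w$1) * (1/(2* sqrt(1+w$2))) + sqrt(1-w$1) * (1/(2* sqrt(1-w$2))))/2 * h$2) *\<^sub>R axis 2 1)) (at w)"
proof -
  have nth: "\<And>i F. ((\<lambda>x::real^2. x$i) has_derivative (\<lambda>x. x$i)) F"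
    by (rule bounded_linear_imp_has_derivative) (rule bounded_linear_vec_nth)
  have p: "0 < 1 + w$1" "0 < 1 + w$2" "0 < 1 - w$1" "0 < 1 - w$2" using assms by auto
  show ?thesis
  unfolding g2_def PhX_def PhY_def
  apply (rule has_derivative_eq_rhs)
   apply (rule derivative_eq_intros nth refl p | simp)+
  apply (intro ext arg_cong2[where f="(+)"] arg_cong2[where f="scaleR"] refl)
   apply (simp_all add: inverse_eq_divide add_divide_distrib diff_divide_distrib)
  using p by (simp_all add: alg_g1 alg_g2)
qed

definition xp :: "real \<Rightarrow> real \<Rightarrow> real" where "xp x y = x * y + sqrt (1 - x ^ 2) * sqrt (1 - y ^ 2)"
definition xm :: "real \<Rightarrow> real \<Rightarrow> real" where "xm x y = x * y - sqrt (1 - x ^ 2) * sqrt (1 - y ^ 2)"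
definition Lam :: "real \<Rightarrow> (real \<times> real) set" where "Lam \<epsilon> = {z \<in> Lambda. \<epsilon> * (fst z + snd z) > 0}"

lemma eps_sq: "\<epsilon> = 1 \<or> \<epsilon> = -1 \<Longrightarrow> \<epsilon> * \<epsilon> = (1::real)" by auto

lemma A1:
  assumes e: "\<epsilon> = 1 \<or> \<epsilon> = -1" and z: "-1 < v" "v < u" "u < 1"
  shows "-1 < PhY \<epsilon> u v \<and> PhY \<epsilon> u v < PhX \<epsilon> u v \<and> PhX \<epsilon> u v < 1 \<and> \<epsilon> * (PhX \<epsilon> u v + PhY \<epsilon> u v) > 0"
proof -
  define s where "s = sqrt (1+u)" define t where "t = sqrt (1+v)"
  define p where "p = sqrt (1-u)" define q where "q = sqrt (1-v)"
  have pos: "s > 0" "t > 0" "p > 0" "q > 0" using z by (auto simp: s_def t_def p_def q_def)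
  have sq: "s * s = 1+u" "t * t = 1+v" "p * p = 1-u" "q * q = 1-v" using z by (auto simp: s_def t_def p_def q_def)
  have "s \<noteq> t" using sq z by auto
  then have "(s-t) * (s-t) > 0" by (auto simp: zero_less_mult_iff)
  moreover have "(p-q) * (p-q) \<ge> 0" by auto
  ultimately have "4 - 2 * (s * t+p * q) > 0" using sq by (simp add: algebra_simps)
  moreover have "\<epsilon> * s * t \<le> s * t" "-(s * t) \<le> \<epsilon> * s * t" using e pos by auto
  moreover have "p * q > 0" "s * t > 0" using pos by auto
  moreover have "\<epsilon> * (PhX \<epsilon> u v + PhY \<epsilon> u v) = (\<epsilon> * \<epsilon>) * (s * t)"
    unfolding PhX_def PhY_def s_def[symmetric] t_def[symmetric] p_def[symmetric] q_def[symmetric]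
    by (simp add: field_simps)
  moreover have "\<epsilon> * \<epsilon> = 1" using e by auto
  ultimately show ?thesis unfolding PhX_def PhY_def s_def[symmetric] t_def[symmetric] p_def[symmetric] q_def[symmetric]
    by (auto simp: algebra_simps)
qed

lemma A2:
  assumes e: "\<epsilon> = 1 \<or> \<epsilon> = -1" and z: "-1 < v" "v < u" "u < 1"
  shows "xp (PhX \<epsilon> u v) (PhY \<epsilon> u v) = u \<and> xm (PhX \<epsilon> u v) (PhY \<epsilon> u v) = v"
proof -
  define s where "s = sqrt (1+u)" define t where "t = sqrt (1+v)"
  define p where "p = sqrt (1-u)" define q where "q = sqrt (1-v)"
  have pos: "s > 0" "t > 0" "p > 0" "q > 0" using z by (auto simp: s_def t_def p_def q_def)
  have sq: "s * s = 1+u" "t * t = 1+v" "p * p = 1-u" "q * q = 1-v" using z by (auto simp: s_def t_def p_def q_def)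
  have ee: "\<epsilon> * \<epsilon> = 1" using e by auto
  define X where "X = PhX \<epsilon> u v" define Y where "Y = PhY \<epsilon> u v"
  have X: "X = (\<epsilon> * s * t + p * q)/2" and Y: "Y = (\<epsilon> * s * t - p * q)/2"
    unfolding X_def Y_def PhX_def PhY_def s_def t_def p_def q_def by auto
  have "X * Y = ((\<epsilon> * \<epsilon>) * (s * s) * (t * t) - (p * p) * (q * q))/4" unfolding X Y by (simp add: algebra_simps)
  then have XY: "X * Y = (u+v)/2" unfolding ee sq by (simp add: algebra_simps)
  have "1 - X^2 = ((s * q - \<epsilon> * t * p)/2)^2"
  proof -
    have "1 - X^2 = (4 - ((\<epsilon> * \<epsilon>) * (s * s) * (t * t) + 2 * \<epsilon> * s * t * p * q + (p * p) * (q * q)))/4"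
      unfolding X by (simp add: power2_eq_square field_simps)
    also have "\<dots> = ((s * s) * (q * q) - 2 * \<epsilon> * s * t * p * q + (\<epsilon> * \<epsilon>) * (t * t) * (p * p))/4"
      unfolding ee sq by (simp add: algebra_simps)
    also have "\<dots> = ((s * q - \<epsilon> * t * p)/2)^2" by (simp add: power2_eq_square algebra_simps)
    finally show ?thesis .
  qed
  then have a: "sqrt (1 - X^2) = \<bar>s * q - \<epsilon> * t * p\<bar>/2" by simp
  have "1 - Y^2 = ((s * q + \<epsilon> * t * p)/2)^2"
  proof -
    have "1 - Y^2 = (4 - ((\<epsilon> * \<epsilon>) * (s * s) * (t * t) - 2 * \<epsilon> * s * t * p * q + (p * p) * (q * q)))/4"
      unfolding Y by (simp add: power2_eq_square field_simps)
    also have "\<dots> = ((s * s) * (q * q) + 2 * \<epsilon> * s * t * p * q + (\<epsilon> * \<epsilon>) * (t * t) * (p * p))/4"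
      unfolding ee sq by (simp add: algebra_simps)
    also have "\<dots> = ((s * q + \<epsilon> * t * p)/2)^2" by (simp add: power2_eq_square algebra_simps)
    finally show ?thesis .
  qed
  then have b: "sqrt (1 - Y^2) = \<bar>s * q + \<epsilon> * t * p\<bar>/2" by simp
  have "(s * q - \<epsilon> * t * p) * (s * q + \<epsilon> * t * p) = (s * s) * (q * q) - (\<epsilon> * \<epsilon>) * (t * t) * (p * p)"
    by (simp add: algebra_simps)
  also have "\<dots> = 2 * (u - v)" unfolding sq ee by (simp add: algebra_simps)
  finally have "sqrt (1 - X^2) * sqrt (1 - Y^2) = (u-v)/2"
    unfolding a b using z by (simp add: abs_mult[symmetric])
  then show ?thesis using XY unfolding xp_def xm_def X_def Y_def by (simp add: field_simps)
qed

lemma A3: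
  assumes e: "\<epsilon> = 1 \<or> \<epsilon> = -1" and z: "-1 < y" "y < x" "x < 1" "\<epsilon> * (x + y) > 0"
  shows "-1 < xm x y \<and> xm x y < xp x y \<and> xp x y < 1 \<and> PhX \<epsilon> (xp x y) (xm x y) = x \<and> PhY \<epsilon> (xp x y) (xm x y) = y"
proof -
  define a where "a = sqrt (1 - x^2)" define b where "b = sqrt (1 - y^2)"
  have x2: "x^2 < 1" "y^2 < 1" using z by (auto simp: abs_square_less_1)
  have pos: "a > 0" "b > 0" using x2 by (auto simp: a_def b_def)
  have sq: "a * a = 1 - x^2" "b * b = 1 - y^2" using x2 by (auto simp: a_def b_def)
  have u: "xp x y = x * y + a * b" and v: "xm x y = x * y - a * b" by (simp_all add: xp_def xm_def a_def b_def)
  have ne: "x + y \<noteq> 0" using z by auto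
  have "2 * (1 - (x * y + a * b)) = (x-y)^2 + (a-b)^2" using sq by (simp add: power2_eq_square algebra_simps)
  moreover have "(x-y)^2 > 0" using z by auto
  moreover have "(a-b)^2 \<ge> 0" by auto
  ultimately have u1: "x * y + a * b < 1" by (smt (verit))
  have "2 * (1 + (x * y - a * b)) = (x+y)^2 + (a-b)^2" using sq by (simp add: power2_eq_square algebra_simps)
  moreover have "(x+y)^2 > 0" using ne by auto
  ultimately have v1: "-1 < x * y - a * b" using \<open>(a-b)^2 \<ge> 0\<close> by (smt (verit))
  have ab2: "(a * b) * (a * b) = (1 - x^2) * (1 - y^2)"
  proof -
    have "(a * b) * (a * b) = (a * a) * (b * b)" by (simp add: algebra_simps)
    then show ?thesis by (simp only: sq)
  qed
  have "(1 + (x * y+a * b)) * (1 + (x * y-a * b)) = (1 + x * y)^2 - (a * b) * (a * b)" by (simp add: power2_eq_square algebra_simps)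
  also have "\<dots> = (x+y)^2" unfolding ab2 by (simp add: power2_eq_square algebra_simps)
  finally have st: "sqrt (1 + (x * y+a * b)) * sqrt (1 + (x * y-a * b)) = \<epsilon> * (x+y)"
    using z e by (auto simp: real_sqrt_mult[symmetric])
  have "(1 - (x * y+a * b)) * (1 - (x * y-a * b)) = (1 - x * y)^2 - (a * b) * (a * b)" by (simp add: power2_eq_square algebra_simps)
  also have "\<dots> = (x-y)^2" unfolding ab2 by (simp add: power2_eq_square algebra_simps)
  finally have pq: "sqrt (1 - (x * y+a * b)) * sqrt (1 - (x * y-a * b)) = x - y"
    using z by (auto simp: real_sqrt_mult[symmetric])
  have ee: "\<epsilon> * \<epsilon> = 1" using e by auto
  have "PhX \<epsilon> (xp x y) (xm x y) = (\<epsilon> * (\<epsilon> * (x+y)) + (x - y))/2"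
    unfolding PhX_def u v using st pq by (simp add: mult.assoc)
  also have "\<dots> = x" using ee by (simp add: algebra_simps mult.assoc[symmetric])
  finally have X: "PhX \<epsilon> (xp x y) (xm x y) = x" .
  have "PhY \<epsilon> (xp x y) (xm x y) = (\<epsilon> * (\<epsilon> * (x+y)) - (x - y))/2"
    unfolding PhY_def u v using st pq by (simp add: mult.assoc)
  also have "\<dots> = y" using ee by (simp add: algebra_simps mult.assoc[symmetric])
  finally have Y: "PhY \<epsilon> (xp x y) (xm x y) = y" .
  show ?thesis using u1 v1 pos X Y unfolding u v by auto
qed

definition Jac :: "real \<Rightarrow> real \<Rightarrow> real" where
  "Jac u v = (u - v) / (4 * sqrt (1+u) * sqrt (1+v) * sqrt (1-u) * sqrt (1-v))"

definition gD :: "real \<Rightarrow> real^2 \<Rightarrow> real^2 \<Rightarrow> real^2" where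
  "gD \<epsilon> w = (\<lambda>h. 
     ((\<epsilon> * (1/(2 * sqrt(1+w$1))) * sqrt(1+w$2) - (1/(2 * sqrt(1-w$1))) * sqrt(1-w$2))/2 * h$1 +
      (\<epsilon> * sqrt(1+w$1) * (1/(2 * sqrt(1+w$2))) - sqrt(1-w$1) * (1/(2 * sqrt(1-w$2))))/2 * h$2) *\<^sub>R axis 1 1 +
     ((\<epsilon> * (1/(2 * sqrt(1+w$1))) * sqrt(1+w$2) + (1/(2 * sqrt(1-w$1))) * sqrt(1-w$2))/2 * h$1 +
      (\<epsilon> * sqrt(1+w$1) * (1/(2 * sqrt(1+w$2))) + sqrt(1-w$1) * (1/(2 * sqrt(1-w$2))))/2 * h$2) *\<^sub>R axis 2 1)"

lemma det_alg:
  assumes "a > 0" "b > 0" "c > 0" "d > 0"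
  shows "((e::real) * (1/(2 * a)) * b - (1/(2 * c)) * d)/2 * ((e * a * (1/(2 * b)) + c * (1/(2 * d)))/2)
       - (e * a * (1/(2 * b)) - c * (1/(2 * d)))/2 * ((e * (1/(2 * a)) * b + (1/(2 * c)) * d)/2)
       = e * ((b * b) * (c * c) - (a * a) * (d * d)) / (8 * a * b * c * d)"
  using assms by (simp add: field_simps)

lemma det_gD:
  assumes e: "\<epsilon> = 1 \<or> \<epsilon> = -1" and z: "-1 < w$2" "w$2 < w$1" "w$1 < 1"
  shows "\<bar>det (matrix (gD \<epsilon> w))\<bar> = Jac (w$1) (w$2)"
proof -
  define u where "u = w$1" define v where "v = w$2"
  have z': "-1 < v" "v < u" "u < 1" using z by (auto simp: u_def v_def)
  define s where "s = sqrt (1+u)" define t where "t = sqrt (1+v)"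
  define p where "p = sqrt (1-u)" define q where "q = sqrt (1-v)"
  have pos: "s > 0" "t > 0" "p > 0" "q > 0" using z' by (auto simp: s_def t_def p_def q_def)
  have sq: "s * s = 1+u" "t * t = 1+v" "p * p = 1-u" "q * q = 1-v" using z' by (auto simp: s_def t_def p_def q_def)
  have "det (matrix (gD \<epsilon> w)) = 
     ((\<epsilon> * (1/(2 * s)) * t - (1/(2 * p)) * q)/2) * ((\<epsilon> * s * (1/(2 * t)) + p * (1/(2 * q)))/2)
   - ((\<epsilon> * s * (1/(2 * t)) - p * (1/(2 * q)))/2) * ((\<epsilon> * (1/(2 * s)) * t + (1/(2 * p)) * q)/2)"
    unfolding det_2 matrix_def gD_def s_def t_def p_def q_def u_def v_def by (simp add: axis_def)
  also have "\<dots> = \<epsilon> * ((t * t) * (p * p) - (s * s) * (q * q)) / (8 * s * t * p * q)"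
    by (rule det_alg[OF pos])
  also have "\<dots> = \<epsilon> * (v - u) / (4 * s * t * p * q)" unfolding sq using pos by (simp add: field_simps)
  finally have "\<bar>det (matrix (gD \<epsilon> w))\<bar> = (u - v) / (4 * s * t * p * q)"
    using e z' pos by (auto simp: abs_mult abs_divide)
  then show ?thesis unfolding Jac_def s_def t_def p_def q_def u_def v_def by (simp add: mult.assoc)
qed

lemma blin_vec: "bounded_linear (vec :: real \<Rightarrow> real^1)"
  using linear_conv_bounded_linear linear_vec by blast

lemma borel_to_lebesgue:
  fixes h :: "'a::euclidean_space \<Rightarrow> real"
  assumes "set_integrable lborel A h"
  shows "set_integrable lebesgue A h"
  using assms unfolding set_integrable_def
  by (subst integrable_completion) (auto dest: borel_measurable_integrable)

lemma lebesgue_to_borel: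
  fixes h :: "'a::euclidean_space \<Rightarrow> real"
  assumes "set_integrable lebesgue A h" "(\<lambda>x. indicator A x * h x) \<in> borel_measurable borel"
  shows "set_integrable lborel A h"
  using assms unfolding set_integrable_def
  by (subst (asm) integrable_completion) auto

lemma S_eq: "e2 ` Lambda = {w. -1 < w$2 \<and> w$2 < w$1 \<and> w$1 < 1}"
  by (auto simp: mem_e2_image d2_def Lambda_def)

lemma S_leb: "e2 ` Lambda \<in> sets lebesgue"
proof -
  have "open {w::real^2. -1 < w$2 \<and> w$2 < w$1 \<and> w$1 < 1}"
    by (intro open_Collect_conj open_Collect_less continuous_intros)
  then show ?thesis unfolding S_eq by simp
qed

lemma g2_e2: "g2 \<epsilon> w = e2 (PhX \<epsilon> (w$1) (w$2), PhY \<epsilon> (w$1) (w$2))"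
  by (simp add: g2_def e2_def)

lemma img_g2:
  assumes e: "\<epsilon> = 1 \<or> \<epsilon> = -1"
  shows "g2 \<epsilon> ` (e2 ` Lambda) = e2 ` Lam \<epsilon>"
proof
  show "g2 \<epsilon> ` e2 ` Lambda \<subseteq> e2 ` Lam \<epsilon>"
  proof
    fix w assume "w \<in> g2 \<epsilon> ` e2 ` Lambda"
    then obtain z where z: "z \<in> Lambda" "w = g2 \<epsilon> (e2 z)" by auto
    obtain u v where uv: "z = (u,v)" by fastforce
    have "-1 < v" "v < u" "u < 1" using z uv by (auto simp: Lambda_def)
    from A1[OF e this] have "(PhX \<epsilon> u v, PhY \<epsilon> u v) \<in> Lam \<epsilon>" by (simp add: Lam_def Lambda_def)
    then show "w \<in> e2 ` Lam \<epsilon>" using z uv by (simp add: g2_e2)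
  qed
  show "e2 ` Lam \<epsilon> \<subseteq> g2 \<epsilon> ` e2 ` Lambda"
  proof
    fix w assume "w \<in> e2 ` Lam \<epsilon>"
    then obtain x y where xy: "(x,y) \<in> Lam \<epsilon>" "w = e2 (x,y)" by auto
    have h: "-1 < y" "y < x" "x < 1" "\<epsilon> * (x + y) > 0" using xy by (auto simp: Lam_def Lambda_def)
    from A3[OF e h] have "(xp x y, xm x y) \<in> Lambda" "g2 \<epsilon> (e2 (xp x y, xm x y)) = w"
      using xy by (auto simp: Lambda_def g2_e2)
    then show "w \<in> g2 \<epsilon> ` e2 ` Lambda" by (metis image_eqI)
  qed
qed

lemma inj_g2:
  assumes e: "\<epsilon> = 1 \<or> \<epsilon> = -1"
  shows "inj_on (g2 \<epsilon>) (e2 ` Lambda)"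
proof (rule inj_onI)
  fix w1 w2 assume w: "w1 \<in> e2 ` Lambda" "w2 \<in> e2 ` Lambda" "g2 \<epsilon> w1 = g2 \<epsilon> w2"
  have h1: "-1 < w1$2" "w1$2 < w1$1" "w1$1 < 1" and h2: "-1 < w2$2" "w2$2 < w2$1" "w2$1 < 1"
    using w(1,2) by (auto simp: S_eq)
  have "d2 (g2 \<epsilon> w1) = d2 (g2 \<epsilon> w2)" using w by simp
  then have eq: "PhX \<epsilon> (w1$1) (w1$2) = PhX \<epsilon> (w2$1) (w2$2)" "PhY \<epsilon> (w1$1) (w1$2) = PhY \<epsilon> (w2$1) (w2$2)"
    by (simp_all add: g2_e2)
  have "w1$1 = w2$1" "w1$2 = w2$2" using A2[OF e h1] A2[OF e h2] eq by metis+
  then show "w1 = w2" by (simp add: vec_eq_iff forall_2)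
qed

definition Phi :: "real \<Rightarrow> real \<times> real \<Rightarrow> real \<times> real" where
  "Phi \<epsilon> z = (PhX \<epsilon> (fst z) (snd z), PhY \<epsilon> (fst z) (snd z))"

lemma Phi_meas[measurable]: "Phi \<epsilon> \<in> borel_measurable borel"
  unfolding Phi_def PhX_def PhY_def by (intro borel_measurable_continuous_onI continuous_intros) auto
lemma Jac_meas[measurable]: "(\<lambda>z. Jac (fst z) (snd z)) \<in> borel_measurable borel"
  unfolding Jac_def by (intro borel_measurable_divide borel_measurable_continuous_onI continuous_intros)
lemma Lambda_borel[measurable]: "Lambda \<in> sets borel"
proof -
  have "Lambda = {z. -1 < snd z \<and> snd z < fst z \<and> fst z < 1}" by (auto simp: Lambda_def)
  moreover have "open {z::real\<times>real. -1 < snd z \<and> snd z < fst z \<and> fst z < 1}"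
    by (intro open_Collect_conj open_Collect_less continuous_intros)
  ultimately have "open Lambda" by simp
  then show ?thesis by simp
qed

lemma CV:
  fixes f :: "real \<times> real \<Rightarrow> real"
  assumes e: "\<epsilon> = 1 \<or> \<epsilon> = -1" and fi: "set_integrable lborel (Lam \<epsilon>) f"
  shows "set_integrable lborel Lambda (\<lambda>z. f (Phi \<epsilon> z) * Jac (fst z) (snd z))"
    "(LINT z:Lambda|lborel. f (Phi \<epsilon> z) * Jac (fst z) (snd z)) = (LINT z:Lam \<epsilon>|lborel. f z)"
proof -
  define S where "S = e2 ` Lambda"
  define F2 where "F2 = (\<lambda>w. f (d2 w))"
  define b where "b = (LINT z:Lam \<epsilon>|lborel. f z)"
  have I1: "set_integrable lborel (e2 ` Lam \<epsilon>) F2" and I2: "(LINT w:(e2 ` Lam \<epsilon>)|lborel. F2 w) = b"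
    using set_integrable_to2[OF fi] unfolding F2_def b_def by auto
  have abs1: "F2 absolutely_integrable_on (e2 ` Lam \<epsilon>)" by (rule borel_to_lebesgue[OF I1])
  have hk1: "integral (e2 ` Lam \<epsilon>) F2 = b" using set_borel_integral_eq_integral(2)[OF I1] I2 by simp
  have int1: "F2 integrable_on (e2 ` Lam \<epsilon>)" using set_borel_integral_eq_integral(1)[OF I1] .
  define V2 where "V2 = (\<lambda>w. vec (F2 w) :: real^1)"
  have img: "g2 \<epsilon> ` S = e2 ` Lam \<epsilon>" unfolding S_def by (rule img_g2[OF e])
  have absV: "V2 absolutely_integrable_on (g2 \<epsilon> ` S)"
    unfolding img V2_def using absolutely_integrable_linear[OF abs1 blin_vec] by (simp add: o_def)
  have intV: "integral (g2 \<epsilon> ` S) V2 = vec b"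
    unfolding img V2_def using integral_linear[OF int1 blin_vec] hk1 by (simp add: o_def)
  have der: "\<And>w. w \<in> S \<Longrightarrow> (g2 \<epsilon> has_derivative gD \<epsilon> w) (at w within S)"
  proof -
    fix w assume "w \<in> S"
    then have "-1 < w$2" "w$2 < w$1" "w$1 < 1" unfolding S_def S_eq by auto
    from g2_der[OF this, of \<epsilon>] show "(g2 \<epsilon> has_derivative gD \<epsilon> w) (at w within S)"
      unfolding gD_def by (rule has_derivative_at_withinI)
  qed
  have cv: "(\<lambda>w. \<bar>det (matrix (gD \<epsilon> w))\<bar> *\<^sub>R V2 (g2 \<epsilon> w)) absolutely_integrable_on S \<and>
            integral S (\<lambda>w. \<bar>det (matrix (gD \<epsilon> w))\<bar> *\<^sub>R V2 (g2 \<epsilon> w)) = vec b"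
    using has_absolute_integral_change_of_variables[OF _ der inj_g2[OF e, folded S_def], of V2 "vec b"]
      S_leb absV intV unfolding S_def by blast
  define G where "G = (\<lambda>w. f (Phi \<epsilon> (d2 w)) * Jac (w$1) (w$2))"
  have Geq: "\<And>w. w \<in> S \<Longrightarrow> (\<lambda>y. y$1) (\<bar>det (matrix (gD \<epsilon> w))\<bar> *\<^sub>R V2 (g2 \<epsilon> w)) = G w"
  proof -
    fix w assume "w \<in> S"
    then have "-1 < w$2" "w$2 < w$1" "w$1 < 1" unfolding S_def S_eq by auto
    from det_gD[OF e this] show "(\<lambda>y. y$1) (\<bar>det (matrix (gD \<epsilon> w))\<bar> *\<^sub>R V2 (g2 \<epsilon> w)) = G w"
      by (simp add: G_def V2_def F2_def g2_e2 Phi_def d2_def)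
  qed
  have absG0: "(\<lambda>w. (\<lambda>y. y$1) (\<bar>det (matrix (gD \<epsilon> w))\<bar> *\<^sub>R V2 (g2 \<epsilon> w))) absolutely_integrable_on S"
    using absolutely_integrable_linear[OF cv[THEN conjunct1] bounded_linear_vec_nth[of 1]] by (simp add: o_def)
  have absG: "G absolutely_integrable_on S"
    using absG0 by (rule iffD1[OF set_integrable_cong[OF refl refl Geq], rotated]) 
  have intG0: "integral S (\<lambda>w. (\<lambda>y. y$1) (\<bar>det (matrix (gD \<epsilon> w))\<bar> *\<^sub>R V2 (g2 \<epsilon> w))) = b"
    using integral_linear[OF set_lebesgue_integral_eq_integral(1)[OF cv[THEN conjunct1]] bounded_linear_vec_nth[of 1]]
      cv by (simp add: o_def)
  have intG: "integral S G = b" using intG0 integral_cong[OF Geq, of S] by simp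
  have measH: "(\<lambda>z. indicator Lambda z * (f (Phi \<epsilon> z) * Jac (fst z) (snd z))) \<in> borel_measurable borel"
  proof -
    have m1: "(\<lambda>z. indicator (Lam \<epsilon>) z * f z) \<in> borel_measurable borel"
      using fi unfolding set_integrable_def by (auto dest: borel_measurable_integrable)
    have "(\<lambda>z. indicator Lambda z * ((\<lambda>z. indicator (Lam \<epsilon>) z * f z) (Phi \<epsilon> z) * Jac (fst z) (snd z))) \<in> borel_measurable borel"
      using m1 by measurable
    moreover have "\<And>z. indicator Lambda z * ((\<lambda>z. indicator (Lam \<epsilon>) z * f z) (Phi \<epsilon> z) * Jac (fst z) (snd z))
        = indicator Lambda z * (f (Phi \<epsilon> z) * Jac (fst z) (snd z))"
    proof -
      fix z :: "real \<times> real"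
      show "indicator Lambda z * ((\<lambda>z. indicator (Lam \<epsilon>) z * f z) (Phi \<epsilon> z) * Jac (fst z) (snd z))
        = indicator Lambda z * (f (Phi \<epsilon> z) * Jac (fst z) (snd z))"
      proof (cases "z \<in> Lambda")
        case True
        then have "-1 < snd z" "snd z < fst z" "fst z < 1" by (auto simp: Lambda_def case_prod_beta)
        from A1[OF e this] have "Phi \<epsilon> z \<in> Lam \<epsilon>" by (simp add: Phi_def Lam_def Lambda_def)
        then show ?thesis by simp
      qed simp
    qed
    ultimately show ?thesis by simp
  qed
  have measG: "(\<lambda>w. indicator S w * G w) \<in> borel_measurable borel"
  proof -
    have "(\<lambda>w. (\<lambda>z. indicator Lambda z * (f (Phi \<epsilon> z) * Jac (fst z) (snd z))) (d2 w)) \<in> borel_measurable borel"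
      using measH by measurable
    moreover have "\<And>w. indicator S w * G w = (\<lambda>z. indicator Lambda z * (f (Phi \<epsilon> z) * Jac (fst z) (snd z))) (d2 w)"
      by (simp add: S_def G_def indicator_def mem_e2_image d2_def)
    ultimately show ?thesis by simp
  qed
  have GI: "set_integrable lborel S G" by (rule lebesgue_to_borel[OF absG measG])
  have GL: "(LINT w:S|lborel. G w) = b" using set_borel_integral_eq_integral(2)[OF GI] intG by simp
  have GE: "\<And>z. G (e2 z) = f (Phi \<epsilon> z) * Jac (fst z) (snd z)" by (simp add: G_def)
  show "set_integrable lborel Lambda (\<lambda>z. f (Phi \<epsilon> z) * Jac (fst z) (snd z))"
    using set_integrable_from2(1)[OF GI[unfolded S_def]] unfolding GE .
  show "(LINT z:Lambda|lborel. f (Phi \<epsilon> z) * Jac (fst z) (snd z)) = (LINT z:Lam \<epsilon>|lborel. f z)"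
    using set_integrable_from2(2)[OF GI[unfolded S_def]] GL unfolding GE S_def b_def by simp
qed

inductive spn :: "(nat \<times> nat \<Rightarrow> bool) \<Rightarrow> (real \<Rightarrow> real \<Rightarrow> real) \<Rightarrow> bool" for G where
  spn_zero: "spn G (\<lambda>x y. 0)"
| spn_gen: "G (a, b) \<Longrightarrow> spn G (\<lambda>x y. c * sym_mono a b x y)"
| spn_add: "spn G f \<Longrightarrow> spn G g \<Longrightarrow> spn G (\<lambda>x y. f x y + g x y)"

lemma sym_mono_swap: "sym_mono a b x y = sym_mono b a x y"
  by (simp add: sym_mono_def)

lemma sym_mono_mult: "sym_mono a b x y * sym_mono c d x y = sym_mono (a+c) (b+d) x y + sym_mono (a+d) (b+c) x y"
  by (simp add: sym_mono_def power_add algebra_simps)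

lemma sym_mono_neg: "sym_mono a b (-x) (-y) = (-1)^(a+b) * sym_mono a b x y"
  by (simp add: sym_mono_def power_minus[of x] power_minus[of y] power_add algebra_simps)

lemma sym_mono_flip: "sym_mono a b y x = sym_mono a b x y"
  by (simp add: sym_mono_def algebra_simps)

lemma spn_mono: "spn G f \<Longrightarrow> (\<And>p. G p \<Longrightarrow> G' p) \<Longrightarrow> spn G' f"
  by (induction rule: spn.induct) (auto intro: spn.intros)

lemma spn_scale: "spn G f \<Longrightarrow> spn G (\<lambda>x y. c * f x y)"
proof (induction rule: spn.induct)
  case spn_zero then show ?case by (simp add: spn.spn_zero)
next
  case (spn_gen a b d)
  then show ?case using spn.spn_gen[of G a b "c * d"] by (simp add: mult.assoc)
next
  case (spn_add f g)
  then show ?case using spn.spn_add[OF spn_add.IH] by (simp add: distrib_left)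
qed

lemma spn_ext: "spn G f \<Longrightarrow> (\<And>x y. g x y = f x y) \<Longrightarrow> spn G g"
proof -
  assume "spn G f" "\<And>x y. g x y = f x y"
  then have "g = f" by (auto simp: fun_eq_iff)
  then show ?thesis using \<open>spn G f\<close> by simp
qed

lemma spn_diff: "spn G f \<Longrightarrow> spn G g \<Longrightarrow> spn G (\<lambda>x y. f x y - g x y)"
  using spn_add[OF _ spn_scale[of G g "-1"]] by (rule spn_ext) simp_all

lemma spn_sum: "finite A \<Longrightarrow> (\<And>i. i \<in> A \<Longrightarrow> spn G (F i)) \<Longrightarrow> spn G (\<lambda>x y. \<Sum>i\<in>A. F i x y)"
proof (induction rule: finite_induct)
  case empty then show ?case by (simp add: spn_zero)
next
  case (insert i A)
  then show ?case using spn_add[of G "F i" "\<lambda>x y. \<Sum>i\<in>A. F i x y"] by simp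
qed

lemma spn_mult_gen:
  assumes "spn G2 g" "G1 (a,b)"
    and H: "\<And>c d. G2 (c,d) \<Longrightarrow> G3 (a+c, b+d) \<and> G3 (a+d, b+c)"
  shows "spn G3 (\<lambda>x y. (k * sym_mono a b x y) * g x y)"
  using assms(1)
proof (induction rule: spn.induct)
  case spn_zero then show ?case by (simp add: spn.spn_zero)
next
  case (spn_gen c d e)
  have "spn G3 (\<lambda>x y. (k * e) * sym_mono (a+c) (b+d) x y + (k * e) * sym_mono (a+d) (b+c) x y)"
    using H[OF spn_gen] by (auto intro!: spn.intros)
  moreover have "\<And>x y. k * sym_mono a b x y * (e * sym_mono c d x y) = (k * e) * (sym_mono a b x y * sym_mono c d x y)"
    by (simp add: ac_simps)
  ultimately show ?case by (elim spn_ext) (simp add: sym_mono_mult distrib_left)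
next
  case (spn_add f g)
  then show ?case using spn.spn_add[OF spn_add.IH] by (rule_tac spn_ext) (simp_all add: distrib_left)
qed

lemma spn_mult:
  assumes "spn G1 f" "spn G2 g"
    and H: "\<And>a b c d. G1 (a,b) \<Longrightarrow> G2 (c,d) \<Longrightarrow> G3 (a+c, b+d) \<and> G3 (a+d, b+c)"
  shows "spn G3 (\<lambda>x y. f x y * g x y)"
  using assms(1)
proof (induction rule: spn.induct)
  case spn_zero then show ?case by (simp add: spn.spn_zero)
next
  case (spn_gen a b c)
  show ?case by (rule spn_mult_gen[of G2 g G1 a b, OF assms(2) spn_gen]) (rule H[OF spn_gen])
next
  case (spn_add f1 f2)
  then show ?case using spn.spn_add[OF spn_add.IH] by (rule_tac spn_ext) (simp_all add: distrib_right)
qed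

lemma spn_cont: "spn G f \<Longrightarrow> continuous_on UNIV (\<lambda>z. f (fst z) (snd z))"
  by (induction rule: spn.induct) (auto simp: sym_mono_def intro!: continuous_intros)

definition low :: "nat \<Rightarrow> nat \<Rightarrow> nat \<times> nat \<Rightarrow> bool" where
  "low N K p \<longleftrightarrow> max (fst p) (snd p) \<le> N \<and> fst p + snd p \<le> N + K \<and> \<not> (max (fst p) (snd p) = N \<and> fst p + snd p = N + K)"
definition lowp :: "nat \<Rightarrow> nat \<Rightarrow> nat \<times> nat \<Rightarrow> bool" where
  "lowp N K p \<longleftrightarrow> low N K p \<and> even (fst p + snd p + N + K)"
definition allp :: "nat \<Rightarrow> nat \<Rightarrow> nat \<times> nat \<Rightarrow> bool" where
  "allp N K p \<longleftrightarrow> max (fst p) (snd p) \<le> N \<and> fst p + snd p \<le> N + K \<and> even (fst p + snd p + N + K)"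

definition Rt :: "nat \<Rightarrow> nat \<Rightarrow> (nat \<times> nat \<Rightarrow> bool) \<Rightarrow> (real \<Rightarrow> real \<Rightarrow> real) \<Rightarrow> bool" where
  "Rt N K G f \<longleftrightarrow> (\<exists>c g. c \<noteq> 0 \<and> spn G g \<and> (\<forall>x y. f x y = c * sym_mono N K x y + g x y))"

lemma l1: "max (a::nat) b \<le> N1 \<Longrightarrow> a+b \<le> N1+K1 \<Longrightarrow> \<not>(max a b = N1 \<and> a+b = N1+K1) \<Longrightarrow>
  max c d \<le> N2 \<Longrightarrow> c+d \<le> N2+K2 \<Longrightarrow>
  max (a+c) (b+d) \<le> N1+N2 \<and> a+c+(b+d) \<le> N1+N2+(K1+K2) \<and> \<not>(max (a+c) (b+d) = N1+N2 \<and> a+c+(b+d) = N1+N2+(K1+K2))"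
  by (simp add: max_def split: if_splits; linarith)
lemma l2: "max (a::nat) b \<le> N1 \<Longrightarrow> a+b \<le> N1+K1 \<Longrightarrow> \<not>(max a b = N1 \<and> a+b = N1+K1) \<Longrightarrow>
  max c d \<le> N2 \<Longrightarrow> c+d \<le> N2+K2 \<Longrightarrow>
  max (a+d) (b+c) \<le> N1+N2 \<and> a+d+(b+c) \<le> N1+N2+(K1+K2) \<and> \<not>(max (a+d) (b+c) = N1+N2 \<and> a+d+(b+c) = N1+N2+(K1+K2))"
  by (simp add: max_def split: if_splits; linarith)

lemma l3: "max (a::nat) b \<le> N1 \<Longrightarrow> max c d \<le> N2 \<Longrightarrow> max (a+c) (b+d) \<le> N1+N2 \<and> max (a+d) (b+c) \<le> N1+N2"
  by (simp add: max_def split: if_splits; linarith)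

lemma lowp_add:
  assumes "lowp N1 K1 (a,b)" "allp N2 K2 (c,d)"
  shows "lowp (N1+N2) (K1+K2) (a+c, b+d) \<and> lowp (N1+N2) (K1+K2) (a+d, b+c)"
proof -
  have p: "even (a + c + (b + d) + (N1 + N2) + (K1 + K2))" "even (a + d + (b + c) + (N1 + N2) + (K1 + K2))"
  proof -
    have "even (a + b + N1 + K1)" "even (c + d + N2 + K2)" using assms unfolding lowp_def allp_def by simp_all
    then show "even (a + c + (b + d) + (N1 + N2) + (K1 + K2))" "even (a + d + (b + c) + (N1 + N2) + (K1 + K2))"
      by presburger+
  qed
  have s: "max a b \<le> N1" "a+b \<le> N1+K1" "\<not>(max a b = N1 \<and> a+b = N1+K1)" "max c d \<le> N2" "c+d \<le> N2+K2"
    using assms by (simp_all add: lowp_def low_def allp_def)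
  note p l1[OF s] l2[OF s]
  then show ?thesis by (simp only: lowp_def low_def fst_conv snd_conv simp_thms)
qed

lemma allp_add:
  assumes "allp N1 K1 (a,b)" "allp N2 K2 (c,d)"
  shows "allp (N1+N2) (K1+K2) (a+c, b+d) \<and> allp (N1+N2) (K1+K2) (a+d, b+c)"
proof -
  have p: "even (a + c + (b + d) + (N1 + N2) + (K1 + K2))" "even (a + d + (b + c) + (N1 + N2) + (K1 + K2))"
  proof -
    have "even (a + b + N1 + K1)" "even (c + d + N2 + K2)" using assms unfolding allp_def by simp_all
    then show "even (a + c + (b + d) + (N1 + N2) + (K1 + K2))" "even (a + d + (b + c) + (N1 + N2) + (K1 + K2))"
      by presburger+
  qed
  have s: "a+b \<le> N1+K1" "c+d \<le> N2+K2" "max a b \<le> N1" "max c d \<le> N2" using assms by (simp_all add: allp_def)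
  have "a + c + (b + d) \<le> N1 + N2 + (K1 + K2)" "a + d + (b + c) \<le> N1 + N2 + (K1 + K2)" using s(1,2) by linarith+
  moreover note p l3[OF s(3,4), THEN conjunct1] l3[OF s(3,4), THEN conjunct2]
  ultimately show ?thesis by (simp only: allp_def fst_conv snd_conv simp_thms)
qed

lemma lowp_sym: "lowp N K (a,b) = lowp N K (b,a)"
  by (auto simp: lowp_def low_def max_def add.commute)

lemma lowp_add':
  assumes "allp N1 K1 (a,b)" "lowp N2 K2 (c,d)"
  shows "lowp (N1+N2) (K1+K2) (a+c, b+d) \<and> lowp (N1+N2) (K1+K2) (a+d, b+c)"
  using lowp_add[OF assms(2,1)] lowp_sym by (simp add: add.commute)

lemma lowp_allp: "lowp N K p \<Longrightarrow> allp N K p"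
  by (auto simp: lowp_def low_def allp_def)

lemma Rt_spn_all: "Rt N K (lowp N K) f \<Longrightarrow> K \<le> N \<Longrightarrow> spn (allp N K) f"
proof -
  assume "Rt N K (lowp N K) f" "K \<le> N"
  then obtain c g where cg: "spn (lowp N K) g" "\<And>x y. f x y = c * sym_mono N K x y + g x y"
    unfolding Rt_def by blast
  have "spn (allp N K) g" using spn_mono[OF cg(1), of "allp N K"] lowp_allp by blast
  moreover have "spn (allp N K) (\<lambda>x y. c * sym_mono N K x y)"
    by (rule spn_gen) (use \<open>K \<le> N\<close> in \<open>auto simp: allp_def\<close>)
  ultimately have "spn (allp N K) (\<lambda>x y. c * sym_mono N K x y + g x y)"
    by (intro spn_add)
  then show ?thesis by (rule spn_ext) (simp add: cg)
qed

lemma RtP: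
  assumes K: "K1 \<le> N1" "K2 \<le> N2"
    and f: "Rt N1 K1 (lowp N1 K1) f" and g: "Rt N2 K2 (lowp N2 K2) g"
  shows "Rt (N1+N2) (K1+K2) (lowp (N1+N2) (K1+K2)) (\<lambda>x y. f x y * g x y)"
proof -
  obtain c1 g1 where 1: "c1 \<noteq> 0" "spn (lowp N1 K1) g1" "\<And>x y. f x y = c1 * sym_mono N1 K1 x y + g1 x y"
    using f unfolding Rt_def by blast
  obtain c2 g2 where 2: "c2 \<noteq> 0" "spn (lowp N2 K2) g2" "\<And>x y. g x y = c2 * sym_mono N2 K2 x y + g2 x y"
    using g unfolding Rt_def by blast
  let ?G = "lowp (N1+N2) (K1+K2)"
  have gall: "spn (allp N2 K2) g" using Rt_spn_all[OF g K(2)] .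
  have t1: "spn ?G (\<lambda>x y. (c1 * sym_mono N1 K1 x y) * g2 x y)"
  proof (rule spn_mult_gen[of "lowp N2 K2" g2 "allp N1 K1" N1 K1, OF 2(2)])
    show "allp N1 K1 (N1, K1)" using K unfolding allp_def fst_conv snd_conv by (intro conjI) (simp, simp, presburger)
    then show "\<And>c d. lowp N2 K2 (c, d) \<Longrightarrow> ?G (N1 + c, K1 + d) \<and> ?G (N1 + d, K1 + c)"
      using lowp_add' by blast
  qed
  have t2: "spn ?G (\<lambda>x y. g1 x y * g x y)"
    by (rule spn_mult[OF 1(2) gall]) (rule lowp_add)
  have fg: "\<And>x y. f x y * g x y = (c1 * c2) * (sym_mono N1 K1 x y * sym_mono N2 K2 x y)
      + (c1 * sym_mono N1 K1 x y * g2 x y + g1 x y * g x y)"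
    by (simp add: 1(3) 2(3) algebra_simps)
  have ss: "\<And>x y. sym_mono N1 K1 x y * sym_mono N2 K2 x y = sym_mono (N1+N2) (K1+K2) x y + sym_mono (N1+K2) (K1+N2) x y"
    by (simp add: sym_mono_mult)
  have c12: "c1 * c2 \<noteq> 0" using 1(1) 2(1) by simp
  show ?thesis
  proof (cases "?G (N1+K2, K1+N2)")
    case True
    have "spn ?G (\<lambda>x y. (c1 * c2) * sym_mono (N1+K2) (K1+N2) x y + (c1 * sym_mono N1 K1 x y * g2 x y + g1 x y * g x y))"
      by (intro spn_add spn_gen True t1 t2)
    then show ?thesis unfolding Rt_def using c12
      by (intro exI[of _ "c1 * c2"] exI[of _ "\<lambda>x y. (c1 * c2) * sym_mono (N1+K2) (K1+N2) x y + (c1 * sym_mono N1 K1 x y * g2 x y + g1 x y * g x y)"])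
        (simp add: fg ss algebra_simps)
  next
    case False
    have "max (N1+K2) (K1+N2) = N1 + N2"
    proof -
      have "even (N1 + K2 + (K1 + N2) + (N1 + N2) + (K1 + K2))" by presburger
      moreover have "max (N1+K2) (K1+N2) \<le> N1 + N2" using K by simp
      ultimately show ?thesis using False by (simp add: lowp_def low_def)
    qed
    then have eqs: "\<And>x y. sym_mono (N1+K2) (K1+N2) x y = sym_mono (N1+N2) (K1+K2) x y"
      using K by (auto simp: max_def sym_mono_swap split: if_splits)
    have "spn ?G (\<lambda>x y. c1 * sym_mono N1 K1 x y * g2 x y + g1 x y * g x y)"
      by (intro spn_add t1 t2)
    then show ?thesis unfolding Rt_def using c12
      by (intro exI[of _ "2 * (c1 * c2)"] exI[of _ "\<lambda>x y. c1 * sym_mono N1 K1 x y * g2 x y + g1 x y * g x y"])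
        (simp only: fg ss eqs, simp add: algebra_simps)
  qed
qed

fun pw :: "nat \<Rightarrow> real \<Rightarrow> real \<Rightarrow> real" where
  "pw 0 s p = 2"
| "pw (Suc 0) s p = s"
| "pw (Suc (Suc j)) s p = s * pw (Suc j) s p - p * pw j s p"

lemma pw_eq0: "s = u + v \<Longrightarrow> p = u * v \<Longrightarrow> pw j s p = u^j + v^j"
  by (induction j s p rule: pw.induct) (auto simp: algebra_simps)
lemma pw_eq: "pw j (u + v) (u * v) = u^j + v^j"
  by (rule pw_eq0) auto

definition PWxy :: "nat \<Rightarrow> real \<Rightarrow> real \<Rightarrow> real" where
  "PWxy j x y = pw j (2 * x * y) (x^2 + y^2 - 1)"

lemma Rt_ext: "Rt N K G f \<Longrightarrow> (\<And>x y. h x y = f x y) \<Longrightarrow> Rt N K G h"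
  unfolding Rt_def by auto

lemma Rt_sub: "Rt N K G f \<Longrightarrow> spn G h \<Longrightarrow> Rt N K G (\<lambda>x y. f x y - h x y)"
proof -
  assume "Rt N K G f" "spn G h"
  then obtain c g where cg: "c \<noteq> 0" "spn G g" "\<And>x y. f x y = c * sym_mono N K x y + g x y"
    unfolding Rt_def by blast
  have "spn G (\<lambda>x y. g x y - h x y)" by (rule spn_diff[OF cg(2) \<open>spn G h\<close>])
  then show ?thesis unfolding Rt_def using cg by (intro exI[of _ c] exI[of _ "\<lambda>x y. g x y - h x y"]) auto
qed

lemma Rt_scale: "Rt N K G f \<Longrightarrow> d \<noteq> 0 \<Longrightarrow> Rt N K G (\<lambda>x y. d * f x y)"
proof -
  assume "Rt N K G f" "d \<noteq> 0"
  then obtain c g where cg: "c \<noteq> 0" "spn G g" "\<And>x y. f x y = c * sym_mono N K x y + g x y"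
    unfolding Rt_def by blast
  have "spn G (\<lambda>x y. d * g x y)" by (rule spn_scale[OF cg(2)])
  then show ?thesis unfolding Rt_def using cg \<open>d \<noteq> 0\<close>
    by (intro exI[of _ "d * c"] exI[of _ "\<lambda>x y. d * g x y"]) (auto simp: algebra_simps)
qed

lemma Rt_lowspn:
  assumes "Rt N' K' (lowp N' K') f" "\<And>p. lowp N' K' p \<Longrightarrow> G p" "G (N', K')"
  shows "spn G f"
proof -
  obtain c g where cg: "spn (lowp N' K') g" "\<And>x y. f x y = c * sym_mono N' K' x y + g x y"
    using assms(1) unfolding Rt_def by blast
  have "spn G (\<lambda>x y. c * sym_mono N' K' x y + g x y)"
    by (intro spn_add spn_gen assms(3) spn_mono[OF cg(1)] assms(2))
  then show ?thesis by (rule spn_ext) (simp add: cg)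
qed

lemma Rt_e2: "Rt 2 0 (lowp 2 0) (\<lambda>x y. x^2 + y^2 - 1)"
proof -
  have "lowp 2 0 (0,0)" by (simp add: lowp_def low_def)
  then have "spn (lowp 2 0) (\<lambda>x y. (-1/2) * sym_mono 0 0 x y)" by (rule spn_gen)
  then show ?thesis unfolding Rt_def
    by (intro exI[of _ 1] exI[of _ "\<lambda>x y. (-1/2) * sym_mono 0 0 x y"]) (auto simp: sym_mono_def)
qed

lemma Rt_xy: "Rt 1 1 (lowp 1 1) (\<lambda>x y. 2 * x * y)"
  unfolding Rt_def by (intro exI[of _ 1] exI[of _ "\<lambda>x y. 0"]) (auto simp: sym_mono_def spn_zero)

lemma Rt_one: "Rt 0 0 (lowp 0 0) (\<lambda>x y. 1)"
  unfolding Rt_def by (intro exI[of _ "1/2"] exI[of _ "\<lambda>x y. 0"]) (auto simp: sym_mono_def spn_zero)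

lemma Rt_PW: "Rt j j (lowp j j) (PWxy j)"
proof (induction j rule: nat_less_induct)
  case (1 j)
  show ?case
  proof (cases j)
    case 0
    then show ?thesis unfolding Rt_def PWxy_def
      by (intro exI[of _ 1] exI[of _ "\<lambda>x y. 0"]) (auto simp: sym_mono_def spn_zero)
  next
    case (Suc j1)
    show ?thesis
    proof (cases j1)
      case 0
      then show ?thesis unfolding Rt_def PWxy_def using Suc
        by (intro exI[of _ 1] exI[of _ "\<lambda>x y. 0"]) (auto simp: sym_mono_def spn_zero)
    next
      case (Suc i)
      have j: "j = Suc (Suc i)" using \<open>j = Suc j1\<close> Suc by simp
      have IH1: "Rt (Suc i) (Suc i) (lowp (Suc i) (Suc i)) (PWxy (Suc i))" using 1 j by simp
      have IH0: "Rt i i (lowp i i) (PWxy i)" using 1 j by simp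
      have A: "Rt (1 + Suc i) (1 + Suc i) (lowp (1 + Suc i) (1 + Suc i)) (\<lambda>x y. 2 * x * y * PWxy (Suc i) x y)"
        by (rule RtP[OF _ _ Rt_xy IH1]) auto
      have B: "Rt (2 + i) (0 + i) (lowp (2 + i) (0 + i)) (\<lambda>x y. (x^2 + y^2 - 1) * PWxy i x y)"
        by (rule RtP[OF _ _ Rt_e2 IH0]) auto
      have B': "spn (lowp j j) (\<lambda>x y. (x^2 + y^2 - 1) * PWxy i x y)"
      proof (rule Rt_lowspn[OF B])
        show "lowp j j p" if "lowp (2 + i) (0 + i) p" for p
          using that j unfolding lowp_def low_def by auto
        show "lowp j j (2 + i, 0 + i)" using j unfolding lowp_def low_def by auto
      qed
      have "Rt j j (lowp j j) (\<lambda>x y. 2 * x * y * PWxy (Suc i) x y - (x^2 + y^2 - 1) * PWxy i x y)"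
      proof -
        have A': "Rt j j (lowp j j) (\<lambda>x y. 2 * x * y * PWxy (Suc i) x y)" using A j by simp
        show ?thesis using Rt_sub[OF A' B'] .
      qed
      then show ?thesis by (rule Rt_ext) (simp add: PWxy_def j)
    qed
  qed
qed

lemma Rt_E2L: "Rt (2 * l) 0 (lowp (2 * l) 0) (\<lambda>x y. (x^2 + y^2 - 1)^l)"
proof (induction l)
  case 0 then show ?case using Rt_one by simp
next
  case (Suc l)
  have "Rt (2 + 2 * l) (0 + 0) (lowp (2 + 2 * l) (0 + 0)) (\<lambda>x y. (x^2 + y^2 - 1) * (x^2 + y^2 - 1)^l)"
    by (rule RtP[OF _ _ Rt_e2 Suc]) auto
  then show ?case by simp
qed

lemma Rt_XY: "r \<le> 1 \<Longrightarrow> Rt r 0 (lowp r 0) (\<lambda>x y. (x + y)^r)"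
proof -
  assume "r \<le> 1"
  then consider "r = 0" | "r = 1" by linarith
  then show ?thesis
  proof cases
    case 1 then show ?thesis using Rt_one by simp
  next
    case 2 then show ?thesis unfolding Rt_def
      by (intro exI[of _ 1] exI[of _ "\<lambda>x y. 0"]) (auto simp: sym_mono_def spn_zero)
  qed
qed

definition Ep :: "nat \<Rightarrow> nat \<Rightarrow> nat \<Rightarrow> real \<Rightarrow> real \<Rightarrow> real" where
  "Ep r m l x y = (x + y)^r * ((x^2 + y^2 - 1)^l * PWxy (m - l) x y)"

lemma Rt_Ep: "l \<le> m \<Longrightarrow> r \<le> 1 \<Longrightarrow> Rt (m + l + r) (m - l) (lowp (m + l + r) (m - l)) (Ep r m l)"
proof -
  assume lm: "l \<le> m" and r: "r \<le> 1"
  have A: "Rt (2 * l + (m - l)) (0 + (m - l)) (lowp (2 * l + (m - l)) (0 + (m - l)))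
      (\<lambda>x y. (x^2 + y^2 - 1)^l * PWxy (m - l) x y)"
    by (rule RtP[OF _ _ Rt_E2L Rt_PW]) auto
  have B: "Rt (r + (2 * l + (m - l))) (0 + (0 + (m - l))) (lowp (r + (2 * l + (m - l))) (0 + (0 + (m - l))))
      (\<lambda>x y. (x + y)^r * ((x^2 + y^2 - 1)^l * PWxy (m - l) x y))"
    by (rule RtP[OF _ _ Rt_XY[OF r] A]) auto
  have e: "r + (2 * l + (m - l)) = m + l + r" "0 + (0 + (m - l)) = m - l" using lm by simp_all
  show ?thesis using B unfolding Ep_def e .
qed

lemma xp_xm:
  assumes "\<bar>x\<bar> \<le> 1" "\<bar>y\<bar> \<le> 1"
  shows "xp x y + xm x y = 2 * x * y" "xp x y * xm x y = x^2 + y^2 - 1"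
proof -
  show "xp x y + xm x y = 2 * x * y" by (simp add: xp_def xm_def)
  have "x^2 \<le> 1" "y^2 \<le> 1" using assms by (auto simp: abs_le_square_iff[symmetric] abs_square_le_1)
  then have "(sqrt (1 - x^2) * sqrt (1 - y^2))^2 = (1 - x^2) * (1 - y^2)" by (simp add: power_mult_distrib)
  then show "xp x y * xm x y = x^2 + y^2 - 1" unfolding xp_def xm_def
    by (simp add: algebra_simps power2_eq_square)
qed

lemma sym_mono_pw: "l \<le> m \<Longrightarrow> sym_mono m l u v = (u * v)^l * pw (m - l) (u + v) (u * v)"
proof -
  assume "l \<le> m"
  then obtain j where m: "m = l + j" by (metis le_add_diff_inverse)
  show ?thesis unfolding pw_eq m sym_mono_def by (simp add: power_add power_mult_distrib algebra_simps)
qed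

lemma Ep_ident:
  assumes "\<bar>x\<bar> \<le> 1" "\<bar>y\<bar> \<le> 1" "l \<le> m"
  shows "Ep r m l x y = (x + y)^r * sym_mono m l (xp x y) (xm x y)"
  unfolding Ep_def sym_mono_pw[OF assms(3)] xp_xm[OF assms(1,2)] PWxy_def by simp

definition ad :: "nat \<Rightarrow> nat \<Rightarrow> nat \<times> nat \<Rightarrow> bool" where
  "ad m l p \<longleftrightarrow> max (fst p) (snd p) \<le> m \<and> fst p + snd p \<le> m + l"

lemma dd: "q \<le> (p::nat) \<Longrightarrow> (p+q) div 2 + (p-q) div 2 + (p+q) mod 2 = p"
  by presburger

lemma TRI_step:
  assumes g: "spn (lowp a b) g" and ba: "b \<le> a"
    and IH: "\<And>a' b'. 2 * a' + b' < 2 * a + b \<Longrightarrow> b' \<le> a' \<Longrightarrow>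
       \<exists>H. spn (ad ((a'+b') div 2) ((a'-b') div 2)) H \<and>
         (\<forall>x y. \<bar>x\<bar> \<le> 1 \<longrightarrow> \<bar>y\<bar> \<le> 1 \<longrightarrow> sym_mono a' b' x y = (x+y)^((a'+b') mod 2) * H (xp x y) (xm x y))"
  shows "\<exists>H. spn (ad ((a+b) div 2) ((a-b) div 2)) H \<and>
         (\<forall>x y. \<bar>x\<bar> \<le> 1 \<longrightarrow> \<bar>y\<bar> \<le> 1 \<longrightarrow> g x y = (x+y)^((a+b) mod 2) * H (xp x y) (xm x y))"
  using g
proof (induction rule: spn.induct)
  case spn_zero
  then show ?case by (intro exI[of _ "\<lambda>x y. 0"]) (simp add: spn.spn_zero)
next
  case (spn_gen p q c)
  define p' where "p' = max p q" define q' where "q' = min p q"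
  have sw: "\<And>x y. sym_mono p q x y = sym_mono p' q' x y"
    by (auto simp: p'_def q'_def max_def min_def sym_mono_swap)
  have q'p': "q' \<le> p'" by (simp add: p'_def q'_def)
  have lw: "p' \<le> a" "p' + q' \<le> a + b" "\<not> (p' = a \<and> p' + q' = a + b)" "even (p' + q' + a + b)"
    using spn_gen unfolding lowp_def low_def p'_def q'_def by (auto simp: max_def min_def)
  have lt: "2 * p' + q' < 2 * a + b" using lw by linarith
  obtain H where H: "spn (ad ((p'+q') div 2) ((p'-q') div 2)) H"
    "\<And>x y. \<bar>x\<bar> \<le> 1 \<Longrightarrow> \<bar>y\<bar> \<le> 1 \<Longrightarrow> sym_mono p' q' x y = (x+y)^((p'+q') mod 2) * H (xp x y) (xm x y)"
    using IH[OF lt q'p'] by blast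
  have par: "(p'+q') mod 2 = (a+b) mod 2" using lw(4) by presburger
  have sub: "ad ((a+b) div 2) ((a-b) div 2) z" if "ad ((p'+q') div 2) ((p'-q') div 2) z" for z
  proof -
    have "(p'+q') div 2 \<le> (a+b) div 2" using lw(2) by (simp add: div_le_mono)
    moreover have "(p'+q') div 2 + (p'-q') div 2 \<le> (a+b) div 2 + (a-b) div 2"
      using dd[OF q'p'] dd[OF ba] par lw(1) by linarith
    ultimately show ?thesis using that unfolding ad_def by linarith
  qed
  have "spn (ad ((a+b) div 2) ((a-b) div 2)) (\<lambda>x y. c * H x y)"
    by (rule spn_scale[OF spn_mono[OF H(1) sub]])
  then show ?case using H(2) par by (intro exI[of _ "\<lambda>x y. c * H x y"]) (auto simp: sw)
next
  case (spn_add f g)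
  then obtain Hf Hg where HH: "spn (ad ((a+b) div 2) ((a-b) div 2)) Hf"
    "\<forall>x y. \<bar>x\<bar> \<le> 1 \<longrightarrow> \<bar>y\<bar> \<le> 1 \<longrightarrow> f x y = (x+y)^((a+b) mod 2) * Hf (xp x y) (xm x y)"
    "spn (ad ((a+b) div 2) ((a-b) div 2)) Hg"
    "\<forall>x y. \<bar>x\<bar> \<le> 1 \<longrightarrow> \<bar>y\<bar> \<le> 1 \<longrightarrow> g x y = (x+y)^((a+b) mod 2) * Hg (xp x y) (xm x y)"
    by blast
  have "spn (ad ((a+b) div 2) ((a-b) div 2)) (\<lambda>x y. Hf x y + Hg x y)" by (rule spn.spn_add[OF HH(1,3)])
  moreover have "\<forall>x y. \<bar>x\<bar> \<le> 1 \<longrightarrow> \<bar>y\<bar> \<le> 1 \<longrightarrow> f x y + g x y = (x+y)^((a+b) mod 2) * (Hf (xp x y) (xm x y) + Hg (xp x y) (xm x y))"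
    using HH(2,4) by (simp add: distrib_left)
  ultimately show ?case by blast
qed

lemma TRI:
  "b \<le> a \<Longrightarrow> \<exists>H. spn (ad ((a+b) div 2) ((a-b) div 2)) H \<and>
         (\<forall>x y. \<bar>x\<bar> \<le> 1 \<longrightarrow> \<bar>y\<bar> \<le> 1 \<longrightarrow> sym_mono a b x y = (x+y)^((a+b) mod 2) * H (xp x y) (xm x y))"
proof (induction "2 * a + b" arbitrary: a b rule: less_induct)
  case less
  define r where "r = (a+b) mod 2" define m where "m = (a+b) div 2" define l where "l = (a-b) div 2"
  have r1: "r \<le> 1" by (simp add: r_def)
  have lm: "l \<le> m" unfolding l_def m_def by (simp add: div_le_mono)
  have e1: "a + b = 2 * m + r" unfolding m_def r_def by simp
  have mm: "(a - b) mod 2 = (a + b) mod 2"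
  proof -
    have "a + b = (a - b) + b * 2" using less.prems by simp
    then show ?thesis by (metis mod_mult_self1)
  qed
  have e2: "a - b = 2 * l + r" unfolding l_def r_def using mm by (metis div_mult_mod_eq mult.commute)
  have idx: "m + l + r = a" "m - l = b" using e1 e2 less.prems by linarith+
  obtain c g where cg: "c \<noteq> 0" "spn (lowp a b) g" "\<And>x y. Ep r m l x y = c * sym_mono a b x y + g x y"
    using Rt_Ep[OF lm r1] unfolding idx Rt_def by blast
  obtain Hg where Hg: "spn (ad m l) Hg"
    "\<forall>x y. \<bar>x\<bar> \<le> 1 \<longrightarrow> \<bar>y\<bar> \<le> 1 \<longrightarrow> g x y = (x+y)^r * Hg (xp x y) (xm x y)"
    using TRI_step[OF cg(2) less.prems less.hyps] unfolding r_def m_def l_def by blast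
  have "ad m l (m, l)" using lm by (simp add: ad_def)
  then have sp: "spn (ad m l) (\<lambda>x y. (1/c) * sym_mono m l x y + (-1/c) * Hg x y)"
    by (intro spn.spn_add spn_gen spn_scale Hg(1))
  have eq: "sym_mono a b x y = (x+y)^r * ((1/c) * sym_mono m l (xp x y) (xm x y) + (-1/c) * Hg (xp x y) (xm x y))"
    if "\<bar>x\<bar> \<le> 1" "\<bar>y\<bar> \<le> 1" for x y
  proof -
    have "c * sym_mono a b x y = Ep r m l x y - g x y" using cg(3)[of x y] by simp
    also have "\<dots> = (x+y)^r * sym_mono m l (xp x y) (xm x y) - (x+y)^r * Hg (xp x y) (xm x y)"
      using Ep_ident[OF that lm] Hg(2) that by simp
    finally show ?thesis using cg(1) by (simp add: field_simps)
  qed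
  show ?case using sp eq unfolding r_def m_def l_def by blast
qed

lemma poly_int:
  assumes w: "moments_finite w" and f: "spn G f"
  shows "set_integrable lborel Lambda (\<lambda>z. f (fst z) (snd z) * w (fst z) (snd z))"
  using f
proof (induction rule: spn.induct)
  case spn_zero then show ?case by (simp add: set_integrable_def)
next
  case (spn_gen a b c)
  have i1: "set_integrable lborel Lambda (\<lambda>z. fst z ^ a * snd z ^ b * w (fst z) (snd z))"
    and i2: "set_integrable lborel Lambda (\<lambda>z. fst z ^ b * snd z ^ a * w (fst z) (snd z))"
    using w unfolding moments_finite_def by blast+
  have "set_integrable lborel Lambda (\<lambda>z. c * (fst z ^ a * snd z ^ b * w (fst z) (snd z) + fst z ^ b * snd z ^ a * w (fst z) (snd z)))"
    using set_integral_add(1)[OF i1 i2] by (rule set_integrable_mult_right) 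
  then show ?case by (simp add: sym_mono_def algebra_simps)
next
  case (spn_add f g)
  then show ?case using set_integral_add(1)[OF spn_add.IH] by (simp add: distrib_right)
qed

abbreviation "spnT \<equiv> spn (\<lambda>_. True)"

lemma spnT_mult: "spnT f \<Longrightarrow> spnT g \<Longrightarrow> spnT (\<lambda>x y. f x y * g x y)"
  by (rule spn_mult) auto

lemma spnT_any: "spn G f \<Longrightarrow> spnT f"
  by (rule spn_mono) auto

lemma spnT_sym: "spnT (sym_mono a b)"
  using spn_gen[of "\<lambda>_. True" a b 1] by simp

definition Iset :: "nat \<Rightarrow> nat \<Rightarrow> (nat \<times> nat) set" where
  "Iset n k = {(m, l). l \<le> m \<and> dom_le (m, l) (n, k)}"

lemma Iset_finite: "finite (Iset n k)"
proof -
  have "Iset n k \<subseteq> {..n} \<times> {..n}" by (auto simp: Iset_def dom_le_def)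
  then show ?thesis by (rule finite_subset) auto
qed

lemma Iset_low: "p \<in> Iset n k - {(n,k)} \<Longrightarrow> low n k p"
  by (auto simp: Iset_def dom_le_def low_def max_def)

lemma repr_split:
  assumes "(n,k) \<in> Iset n k" "\<And>x y. F x y = (\<Sum>(m, l) \<in> Iset n k. b (m, l) * E m l x y)"
  shows "\<And>x y. F x y = b (n,k) * E n k x y + (\<Sum>(m, l) \<in> Iset n k - {(n,k)}. b (m, l) * E m l x y)"
  using assms Iset_finite by (simp add: sum.remove)

lemma dom_orth_repr:
  assumes "dominance_orthogonal w P" "k \<le> n"
  shows "\<exists>b g. b \<noteq> 0 \<and> spn (low n k) g \<and> (\<forall>x y. P n k x y = b * sym_mono n k x y + g x y)"
proof -
  obtain b where b: "b (n,k) \<noteq> 0" "\<And>x y. P n k x y = (\<Sum>(m, l) \<in> Iset n k. b (m, l) * sym_mono m l x y)"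
    using assms unfolding dominance_orthogonal_def Iset_def by blast
  have nk: "(n,k) \<in> Iset n k" using assms(2) by (simp add: Iset_def dom_le_def)
  have "spn (low n k) (\<lambda>x y. \<Sum>p \<in> Iset n k - {(n,k)}. (\<lambda>(m,l) x y. b (m, l) * sym_mono m l x y) p x y)"
    by (rule spn_sum) (auto intro!: spn_gen Iset_low simp: Iset_finite)
  then show ?thesis using b(1) repr_split[OF nk b(2)]
    by (intro exI[of _ "b (n,k)"] exI[of _ "\<lambda>x y. \<Sum>(m, l) \<in> Iset n k - {(n,k)}. b (m, l) * sym_mono m l x y"])
       (auto simp: case_prod_beta)
qed

lemma dom_orth_spnT:
  assumes "dominance_orthogonal w P" "k \<le> n"
  shows "spnT (P n k)"
proof -
  obtain b g where "spn (low n k) g" "\<forall>x y. P n k x y = b * sym_mono n k x y + g x y"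
    using dom_orth_repr[OF assms] by blast
  then show ?thesis by (intro spn_ext[OF spn_add[OF spn_gen spnT_any]]) auto
qed

lemma orth_ext:
  assumes P: "dominance_orthogonal w P" and kn: "k \<le> n" and w: "moments_finite w"
    and g: "spn (low n k) g"
  shows "(LINT z:Lambda|lborel. P n k (fst z) (snd z) * g (fst z) (snd z) * w (fst z) (snd z)) = 0"
  using g
proof (induction rule: spn.induct)
  case spn_zero then show ?case by simp
next
  case (spn_gen a b c)
  define m where "m = max a b" define l where "l = min a b"
  have sw: "\<And>x y. sym_mono a b x y = sym_mono m l x y"
    by (auto simp: m_def l_def max_def min_def sym_mono_swap)
  have "l \<le> m" "dom_lt (m, l) (n, k)" using spn_gen
    by (auto simp: m_def l_def low_def dom_lt_def dom_le_def max_def min_def)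
  then have "(LINT z:Lambda|lborel. P n k (fst z) (snd z) * sym_mono m l (fst z) (snd z) * w (fst z) (snd z)) = 0"
    using P kn unfolding dominance_orthogonal_def by blast
  moreover have "(\<lambda>z. P n k (fst z) (snd z) * (c * sym_mono a b (fst z) (snd z)) * w (fst z) (snd z))
      = (\<lambda>z. c * (P n k (fst z) (snd z) * sym_mono m l (fst z) (snd z) * w (fst z) (snd z)))"
    by (simp add: sw fun_eq_iff ac_simps)
  ultimately show ?case by simp
next
  case (spn_add f g)
  have i: "set_integrable lborel Lambda (\<lambda>z. P n k (fst z) (snd z) * f (fst z) (snd z) * w (fst z) (snd z))"
    "set_integrable lborel Lambda (\<lambda>z. P n k (fst z) (snd z) * g (fst z) (snd z) * w (fst z) (snd z))"
    using poly_int[OF w spnT_mult[OF dom_orth_spnT[OF P kn] spnT_any[OF spn_add(1)]]]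
      poly_int[OF w spnT_mult[OF dom_orth_spnT[OF P kn] spnT_any[OF spn_add(2)]]] by simp_all
  show ?case using set_integral_add(2)[OF i] spn_add.IH by (simp add: distrib_left distrib_right)
qed

lemma orth_gen_ext:
  assumes w: "moments_finite w" and F: "spnT F"
    and o: "\<And>a b. G (a,b) \<Longrightarrow> (LINT z:Lambda|lborel. F (fst z) (snd z) * sym_mono a b (fst z) (snd z) * w (fst z) (snd z)) = 0"
    and g: "spn G g"
  shows "(LINT z:Lambda|lborel. F (fst z) (snd z) * g (fst z) (snd z) * w (fst z) (snd z)) = 0"
  using g
proof (induction rule: spn.induct)
  case spn_zero then show ?case by simp
next
  case (spn_gen a b c)
  have "(\<lambda>z. F (fst z) (snd z) * (c * sym_mono a b (fst z) (snd z)) * w (fst z) (snd z))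
      = (\<lambda>z. c * (F (fst z) (snd z) * sym_mono a b (fst z) (snd z) * w (fst z) (snd z)))"
    by (simp add: fun_eq_iff ac_simps)
  then show ?case using o[OF spn_gen] by simp
next
  case (spn_add f g)
  have i: "set_integrable lborel Lambda (\<lambda>z. F (fst z) (snd z) * f (fst z) (snd z) * w (fst z) (snd z))"
    "set_integrable lborel Lambda (\<lambda>z. F (fst z) (snd z) * g (fst z) (snd z) * w (fst z) (snd z))"
    using poly_int[OF w spnT_mult[OF F spnT_any[OF spn_add(1)]]]
      poly_int[OF w spnT_mult[OF F spnT_any[OF spn_add(2)]]] by simp_all
  show ?case using set_integral_add(2)[OF i] spn_add.IH by (simp add: distrib_left distrib_right)
qed

lemma one_closure: "(1,1) \<in> closure Lambda"
proof (unfold closure_approachable, intro allI impI)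
  fix e :: real assume e: "e > 0"
  define d where "d = min (e/4) (1/4)"
  have d: "d > 0" "d \<le> e/4" "d \<le> 1/4" using e by (auto simp: d_def)
  have "(1 - d, 1 - 2 * d) \<in> Lambda" using d by (simp add: Lambda_def)
  moreover have "dist (1 - d, 1 - 2 * d) (1::real, 1::real) < e"
  proof -
    have "dist (1 - d, 1 - 2 * d) (1::real, 1::real) = sqrt (d^2 + (2*d)^2)"
      by (simp add: dist_Pair_Pair dist_real_def)
    also have "\<dots> \<le> \<bar>d\<bar> + \<bar>2 * d\<bar>" by (rule sqrt_sum_squares_le_sum_abs)
    also have "\<dots> < e" using d by simp
    finally show ?thesis .
  qed
  ultimately show "\<exists>y\<in>Lambda. dist y (1, 1) < e" by blast
qed

lemma Lambda_open: "open Lambda"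
proof -
  have "Lambda = {z. -1 < snd z \<and> snd z < fst z \<and> fst z < 1}" by (auto simp: Lambda_def)
  moreover have "open {z::real\<times>real. -1 < snd z \<and> snd z < fst z \<and> fst z < 1}"
    by (intro open_Collect_conj open_Collect_less continuous_intros)
  ultimately show ?thesis by simp
qed

lemma zero_of_L2:
  assumes w: "moments_finite w" and wpos: "\<And>z. z \<in> Lambda \<Longrightarrow> w (fst z) (snd z) > 0"
    and D: "spnT D"
    and I: "(LINT z:Lambda|lborel. D (fst z) (snd z) * D (fst z) (snd z) * w (fst z) (snd z)) = 0"
  shows "\<And>z. z \<in> Lambda \<or> z = (1,1) \<Longrightarrow> D (fst z) (snd z) = 0"
proof -
  let ?f = "\<lambda>z. indicator Lambda z *\<^sub>R (D (fst z) (snd z) * D (fst z) (snd z) * w (fst z) (snd z))"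
  have int: "integrable lborel ?f"
    using poly_int[OF w spnT_mult[OF D D]] unfolding set_integrable_def by simp
  have nn0: "0 \<le> ?f z" for z
  proof (cases "z \<in> Lambda")
    case True
    have "0 \<le> D (fst z) (snd z) * D (fst z) (snd z)" by simp
    moreover have "0 \<le> w (fst z) (snd z)" using wpos[OF True] by simp
    ultimately show ?thesis using True by simp
  qed simp
  have nn: "AE z in lborel. 0 \<le> ?f z" using nn0 by simp
  have "integral\<^sup>L lborel ?f = 0" using I unfolding set_lebesgue_integral_def .
  then have "AE z in lborel. ?f z = 0" using integral_nonneg_eq_0_iff_AE[OF int nn] by simp
  then have "AE z in lborel. z \<in> Lambda \<longrightarrow> z \<in> {z. D (fst z) (snd z) = 0}"
  proof (rule AE_mp, intro AE_I2 impI)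
    fix z assume "?f z = 0" "z \<in> Lambda"
    with wpos[OF \<open>z \<in> Lambda\<close>] show "z \<in> {z. D (fst z) (snd z) = 0}" by simp
  qed
  then have ae: "AE z \<in> Lambda in lebesgue. z \<in> {z. D (fst z) (snd z) = 0}" by (rule AE_completion)
  have cl: "closed {z. D (fst z) (snd z) = 0}"
    using spn_cont[OF D] by (intro closed_Collect_eq) (auto simp: continuous_on_const)
  have sub: "Lambda \<subseteq> {z. D (fst z) (snd z) = 0}"
    using mem_closed_if_AE_lebesgue_open[OF Lambda_open cl ae] by blast
  have "closure Lambda \<subseteq> {z. D (fst z) (snd z) = 0}" by (rule closure_minimal[OF sub cl])
  then show "\<And>z. z \<in> Lambda \<or> z = (1,1) \<Longrightarrow> D (fst z) (snd z) = 0"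
    using sub one_closure by auto
qed

lemma uniq:
  assumes w: "moments_finite w" and wpos: "\<And>z. z \<in> Lambda \<Longrightarrow> w (fst z) (snd z) > 0"
    and F: "\<And>x y. F x y = c * sym_mono N K x y + gF x y" and gF: "spn (low N K) gF"
    and P: "\<And>x y. P x y = bP * sym_mono N K x y + gP x y" and gP: "spn (low N K) gP" and bP: "bP \<noteq> 0"
    and oF: "\<And>a b. low N K (a,b) \<Longrightarrow> (LINT z:Lambda|lborel. F (fst z) (snd z) * sym_mono a b (fst z) (snd z) * w (fst z) (snd z)) = 0"
    and oP: "\<And>a b. low N K (a,b) \<Longrightarrow> (LINT z:Lambda|lborel. P (fst z) (snd z) * sym_mono a b (fst z) (snd z) * w (fst z) (snd z)) = 0"
  shows "\<And>z. z \<in> Lambda \<or> z = (1,1) \<Longrightarrow> F (fst z) (snd z) = (c / bP) * P (fst z) (snd z)"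
proof -
  define D where "D = (\<lambda>x y. F x y - (c / bP) * P x y)"
  have "spn (low N K) (\<lambda>x y. gF x y - (c / bP) * gP x y)" by (rule spn_diff[OF gF spn_scale[OF gP]])
  then have Ds: "spn (low N K) D" by (rule spn_ext) (simp add: D_def F P bP algebra_simps)
  have Fs: "spnT F" by (rule spn_ext[OF spn_add[OF spn_gen spnT_any[OF gF]]]) (auto simp: F)
  have Ps: "spnT P" by (rule spn_ext[OF spn_add[OF spn_gen spnT_any[OF gP]]]) (auto simp: P)
  have o1: "(LINT z:Lambda|lborel. F (fst z) (snd z) * D (fst z) (snd z) * w (fst z) (snd z)) = 0"
    by (rule orth_gen_ext[OF w Fs _ Ds]) (rule oF)
  have o2: "(LINT z:Lambda|lborel. P (fst z) (snd z) * D (fst z) (snd z) * w (fst z) (snd z)) = 0"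
    by (rule orth_gen_ext[OF w Ps _ Ds]) (rule oP)
  have i1: "set_integrable lborel Lambda (\<lambda>z. F (fst z) (snd z) * D (fst z) (snd z) * w (fst z) (snd z))"
    using poly_int[OF w spnT_mult[OF Fs spnT_any[OF Ds]]] by simp
  have i2: "set_integrable lborel Lambda (\<lambda>z. (c / bP) * (P (fst z) (snd z) * D (fst z) (snd z) * w (fst z) (snd z)))"
    using poly_int[OF w spnT_mult[OF Ps spnT_any[OF Ds]]] by simp
  have "(LINT z:Lambda|lborel. D (fst z) (snd z) * D (fst z) (snd z) * w (fst z) (snd z))
      = (LINT z:Lambda|lborel. F (fst z) (snd z) * D (fst z) (snd z) * w (fst z) (snd z) - (c / bP) * (P (fst z) (snd z) * D (fst z) (snd z) * w (fst z) (snd z)))"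
    by (simp add: D_def algebra_simps)
  also have "\<dots> = 0" using set_integral_diff(2)[OF i1 i2] o1 o2 by simp
  finally have "(LINT z:Lambda|lborel. D (fst z) (snd z) * D (fst z) (snd z) * w (fst z) (snd z)) = 0" .
  from zero_of_L2[OF w wpos spnT_any[OF Ds] this]
  show "\<And>z. z \<in> Lambda \<or> z = (1,1) \<Longrightarrow> F (fst z) (snd z) = (c / bP) * P (fst z) (snd z)"
    by (simp add: D_def)
qed

lemma Lam_sub: "Lam \<epsilon> \<subseteq> Lambda" by (auto simp: Lam_def)
lemma Lam_meas: "Lam \<epsilon> \<in> sets lborel"
proof -
  have "Lam \<epsilon> = Lambda \<inter> {z. 0 < \<epsilon> * (fst z + snd z)}" by (auto simp: Lam_def)
  moreover have "open {z::real\<times>real. 0 < \<epsilon> * (fst z + snd z)}"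
    by (intro open_Collect_less continuous_intros)
  ultimately show ?thesis using Lambda_borel by (simp add: sets.Int)
qed

lemma line_null: "{z::real\<times>real. fst z + snd z = 0} \<in> null_sets lborel"
proof -
  have eq: "{z::real\<times>real. fst z + snd z = 0} = {z. (1,1) \<bullet> z = 0}" by (auto simp: inner_prod_def)
  have "negligible {z::real\<times>real. (1,1) \<bullet> z = 0}" by (rule negligible_hyperplane) (simp add: zero_prod_def)
  then have "{z::real\<times>real. fst z + snd z = 0} \<in> null_sets lebesgue" unfolding eq negligible_iff_null_sets .
  moreover have "{z::real\<times>real. fst z + snd z = 0} \<in> sets lborel"
  proof -
    have "closed {z::real\<times>real. fst z + snd z = 0}" by (intro closed_Collect_eq continuous_intros)
    then show ?thesis by simp
  qed
  ultimately show ?thesis using null_sets_completion_iff by blast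
qed

lemma CVsum:
  fixes f :: "real \<times> real \<Rightarrow> real"
  assumes fi: "set_integrable lborel Lambda f"
  shows "(LINT z:Lambda|lborel. f z) =
    (LINT z:Lambda|lborel. f (Phi 1 z) * Jac (fst z) (snd z) + f (Phi (-1) z) * Jac (fst z) (snd z))"
proof -
  have fi1: "set_integrable lborel (Lam 1) f" and fi2: "set_integrable lborel (Lam (-1)) f"
    using set_integrable_subset[OF fi Lam_meas Lam_sub] by auto
  have "(LINT z:Lambda|lborel. f z) = (LINT z:(Lam 1 \<union> Lam (-1))|lborel. f z)"
  proof (rule set_integral_cong_set)
    show "set_borel_measurable lborel (Lam 1 \<union> Lam (-1)) f"
      using set_integrable_Un[OF fi1 fi2 Lam_meas Lam_meas]
      by (auto simp: set_borel_measurable_def set_integrable_def dest: borel_measurable_integrable)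
    show "set_borel_measurable lborel Lambda f"
      using fi by (auto simp: set_borel_measurable_def set_integrable_def dest: borel_measurable_integrable)
    show "AE x in lborel. (x \<in> Lam 1 \<union> Lam (-1)) = (x \<in> Lambda)"
      by (rule AE_I'[OF line_null]) (auto simp: Lam_def)
  qed
  also have "\<dots> = (LINT z:Lam 1|lborel. f z) + (LINT z:Lam (-1)|lborel. f z)"
    by (rule set_integral_Un[OF _ fi1 fi2]) (auto simp: Lam_def)
  also have "\<dots> = (LINT z:Lambda|lborel. f (Phi 1 z) * Jac (fst z) (snd z)) + (LINT z:Lambda|lborel. f (Phi (-1) z) * Jac (fst z) (snd z))"
    using CV(2)[of 1 f] CV(2)[of "-1" f] fi1 fi2 by simp
  also have "\<dots> = (LINT z:Lambda|lborel. f (Phi 1 z) * Jac (fst z) (snd z) + f (Phi (-1) z) * Jac (fst z) (snd z))"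
    using set_integral_add(2)[OF CV(1)[of 1 f] CV(1)[of "-1" f]] fi1 fi2 by simp
  finally show ?thesis .
qed

lemma Phi_props:
  assumes e: "\<epsilon> = 1 \<or> \<epsilon> = -1" and z: "(u,v) \<in> Lambda"
  shows "Phi \<epsilon> (u,v) \<in> Lambda"
    "xp (fst (Phi \<epsilon> (u,v))) (snd (Phi \<epsilon> (u,v))) = u"
    "xm (fst (Phi \<epsilon> (u,v))) (snd (Phi \<epsilon> (u,v))) = v"
    "fst (Phi \<epsilon> (u,v)) - snd (Phi \<epsilon> (u,v)) = sqrt (1-u) * sqrt (1-v)"
    "fst (Phi \<epsilon> (u,v)) + snd (Phi \<epsilon> (u,v)) = \<epsilon> * sqrt (1+u) * sqrt (1+v)"
proof -
  have h: "-1 < v" "v < u" "u < 1" using z by (auto simp: Lambda_def)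
  show "Phi \<epsilon> (u,v) \<in> Lambda" using A1[OF e h] by (simp add: Phi_def Lambda_def)
  show "xp (fst (Phi \<epsilon> (u,v))) (snd (Phi \<epsilon> (u,v))) = u" "xm (fst (Phi \<epsilon> (u,v))) (snd (Phi \<epsilon> (u,v))) = v"
    using A2[OF e h] by (simp_all add: Phi_def)
  show "fst (Phi \<epsilon> (u,v)) - snd (Phi \<epsilon> (u,v)) = sqrt (1-u) * sqrt (1-v)"
    "fst (Phi \<epsilon> (u,v)) + snd (Phi \<epsilon> (u,v)) = \<epsilon> * sqrt (1+u) * sqrt (1+v)"
    by (simp_all add: Phi_def PhX_def PhY_def field_simps)
qed

lemma Phi_m1: "Phi (-1) z = (- snd (Phi 1 z), - fst (Phi 1 z))"
  by (simp add: Phi_def PhX_def PhY_def field_simps)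

lemma Jac_mul:
  assumes z: "(u,v) \<in> Lambda"
  shows "sqrt (1-u) * sqrt (1-v) * Jac u v = (u - v) / (4 * sqrt (1+u) * sqrt (1+v))"
proof -
  have "0 < 1-u" "0 < 1-v" "0 < 1+u" "0 < 1+v" using z by (auto simp: Lambda_def)
  then have "sqrt (1-u) > 0" "sqrt (1-v) > 0" "sqrt (1+u) > 0" "sqrt (1+v) > 0" by auto
  then show ?thesis unfolding Jac_def by (simp add: field_simps)
qed

lemma powr_half:
  assumes "0 < (a::real)"
  shows "a powr (-1/2) = 1 / sqrt a" "a powr (1/2) = sqrt a"
proof -
  show "a powr (1/2) = sqrt a" using assms by (simp add: powr_half_sqrt)
  then show "a powr (-1/2) = 1 / sqrt a" using assms by (simp add: powr_minus_divide[of a "1/2", simplified])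
qed

lemma fPhi:
  assumes e: "\<epsilon> = 1 \<or> \<epsilon> = -1" and z: "(u,v) \<in> Lambda"
    and V_def: "\<forall>(x, y) \<in> Lambda. V (xp x y) (xm x y) = W x y"
  shows "A (xp (fst (Phi \<epsilon> (u,v))) (snd (Phi \<epsilon> (u,v)))) (xm (fst (Phi \<epsilon> (u,v))) (snd (Phi \<epsilon> (u,v))))
      * B (fst (Phi \<epsilon> (u,v))) (snd (Phi \<epsilon> (u,v)))
      * (W (fst (Phi \<epsilon> (u,v))) (snd (Phi \<epsilon> (u,v))) * (fst (Phi \<epsilon> (u,v)) - snd (Phi \<epsilon> (u,v)))) * Jac u v
    = A u v * B (fst (Phi \<epsilon> (u,v))) (snd (Phi \<epsilon> (u,v))) * V u v * ((u - v) / (4 * sqrt (1+u) * sqrt (1+v)))"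
proof -
  note pp = Phi_props[OF e z]
  have W: "W (fst (Phi \<epsilon> (u,v))) (snd (Phi \<epsilon> (u,v))) = V u v"
    using V_def pp(1) pp(2,3) by (cases "Phi \<epsilon> (u,v)") auto
  show ?thesis unfolding pp(2,3,4) W using Jac_mul[OF z] by (simp add: mult.assoc)
qed

lemma orth_core:
  fixes f :: "real \<times> real \<Rightarrow> real"
  assumes fi: "set_integrable lborel Lambda f"
    and ptw: "\<And>z. z \<in> Lambda \<Longrightarrow> f (Phi 1 z) * Jac (fst z) (snd z) + f (Phi (-1) z) * Jac (fst z) (snd z)
        = c0 * (Qf n k (fst z) (snd z) * H (fst z) (snd z) * wr (fst z) (snd z))"
    and orth: "dominance_orthogonal wr Qf" and kn: "k \<le> n" and mom: "moments_finite wr"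
    and H: "spn (low n k) H"
  shows "(LINT z:Lambda|lborel. f z) = 0"
proof -
  have "(LINT z:Lambda|lborel. f z) =
    (LINT z:Lambda|lborel. f (Phi 1 z) * Jac (fst z) (snd z) + f (Phi (-1) z) * Jac (fst z) (snd z))"
    by (rule CVsum[OF fi])
  also have "\<dots> = (LINT z:Lambda|lborel. c0 * (Qf n k (fst z) (snd z) * H (fst z) (snd z) * wr (fst z) (snd z)))"
    by (rule set_lebesgue_integral_cong) (use ptw Lambda_borel in auto)
  also have "\<dots> = c0 * (LINT z:Lambda|lborel. Qf n k (fst z) (snd z) * H (fst z) (snd z) * wr (fst z) (snd z))"
    by simp
  also have "\<dots> = 0" using orth_ext[OF orth kn mom H] by simp
  finally show ?thesis .
qed

lemma ad_low:
  assumes ba: "b \<le> a" and kn: "k \<le> n" and lw: "low (n + k + (a+b) mod 2) (n - k) (a, b)"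
    and p: "ad ((a+b) div 2) ((a-b) div 2) p"
  shows "low n k p"
proof -
  define m where "m = (a+b) div 2" define l where "l = (a-b) div 2" define r where "r = (a+b) mod 2"
  have e1: "m + l + r = a" using dd[OF ba] unfolding m_def l_def r_def by simp
  have e2: "a + b = 2 * m + r" unfolding m_def r_def by simp
  have lw': "a \<le> n + k + r" "a + b \<le> n + k + r + (n - k)" "\<not> (a = n + k + r \<and> a + b = n + k + r + (n - k))"
    using lw ba unfolding low_def r_def by (auto simp: max_def)
  have "m + l \<le> n + k" "m \<le> n" "\<not> (m + l = n + k \<and> m = n)" using lw' e1 e2 kn by linarith+
  then show ?thesis using p unfolding ad_def low_def m_def[symmetric] l_def[symmetric] by linarith
qed

lemma TRI':
  assumes kn: "k \<le> n" and lw: "low (n + k + (a+b) mod 2) (n - k) (a, b)"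
  shows "\<exists>H. spn (low n k) H \<and>
         (\<forall>x y. \<bar>x\<bar> \<le> 1 \<longrightarrow> \<bar>y\<bar> \<le> 1 \<longrightarrow> sym_mono a b x y = (x+y)^((a+b) mod 2) * H (xp x y) (xm x y))"
proof -
  define a' where "a' = max a b" define b' where "b' = min a b"
  have ba: "b' \<le> a'" by (simp add: a'_def b'_def)
  have sw: "\<And>x y. sym_mono a b x y = sym_mono a' b' x y"
    by (auto simp: a'_def b'_def max_def min_def sym_mono_swap)
  have s: "a' + b' = a + b" by (simp add: a'_def b'_def)
  have lw': "low (n + k + (a'+b') mod 2) (n - k) (a', b')" using lw unfolding s
    by (auto simp: low_def a'_def b'_def max_def min_def)
  obtain H where H: "spn (ad ((a'+b') div 2) ((a'-b') div 2)) H"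
    "\<forall>x y. \<bar>x\<bar> \<le> 1 \<longrightarrow> \<bar>y\<bar> \<le> 1 \<longrightarrow> sym_mono a' b' x y = (x+y)^((a'+b') mod 2) * H (xp x y) (xm x y)"
    using TRI[OF ba] by blast
  have "spn (low n k) H" by (rule spn_mono[OF H(1)]) (rule ad_low[OF ba kn lw'])
  then show ?thesis using H(2) unfolding sw s by blast
qed

lemma in_sq: "(x, y) \<in> Lambda \<Longrightarrow> \<bar>x\<bar> \<le> 1 \<and> \<bar>y\<bar> \<le> 1"
  by (auto simp: Lambda_def)

lemma sym_neg_flip: "sym_mono a b (-y) (-x) = (-1)^(a+b) * sym_mono a b x y"
  using sym_mono_neg[of a b y x] sym_mono_flip[of a b x y] by simp

lemma orthQ:
  fixes W V :: "real \<Rightarrow> real \<Rightarrow> real" and Q :: "nat \<Rightarrow> nat \<Rightarrow> real \<Rightarrow> real \<Rightarrow> real"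
  assumes V_def: "\<forall>(x, y) \<in> Lambda. V (xp x y) (xm x y) = W x y"
    and momQ: "moments_finite (\<lambda>x y. (1 + x) powr (-1/2) * (1 + y) powr (-1/2) * V x y * (x - y))"
    and Q_orth: "dominance_orthogonal (\<lambda>x y. (1 + x) powr (-1/2) * (1 + y) powr (-1/2) * V x y * (x - y)) Q"
    and kn: "k \<le> n" and lw: "low (n + k) (n - k) (a, b)"
    and fi: "set_integrable lborel Lambda (\<lambda>z. Q n k (xp (fst z) (snd z)) (xm (fst z) (snd z))
               * sym_mono a b (fst z) (snd z) * (W (fst z) (snd z) * (fst z - snd z)))"
  shows "(LINT z:Lambda|lborel. Q n k (xp (fst z) (snd z)) (xm (fst z) (snd z))
               * sym_mono a b (fst z) (snd z) * (W (fst z) (snd z) * (fst z - snd z))) = 0"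
proof -
  define wQ where "wQ = (\<lambda>x y. (1 + x) powr (-1/2) * (1 + y) powr (-1/2) * V x y * (x - y))"
  define f where "f = (\<lambda>z. Q n k (xp (fst z) (snd z)) (xm (fst z) (snd z))
               * sym_mono a b (fst z) (snd z) * (W (fst z) (snd z) * (fst z - snd z)))"
  have base: "f (Phi 1 z) * Jac (fst z) (snd z) + f (Phi (-1) z) * Jac (fst z) (snd z)
      = (1 + (-1)^(a+b)) / 4 * (Q n k (fst z) (snd z) * sym_mono a b (fst (Phi 1 z)) (snd (Phi 1 z)) * wQ (fst z) (snd z))"
    if z: "z \<in> Lambda" for z
  proof -
    obtain u v where uv: "z = (u,v)" by fastforce
    have zl: "(u,v) \<in> Lambda" using z uv by simp
    have t1: "f (Phi 1 (u,v)) * Jac u v = Q n k u v * sym_mono a b (fst (Phi 1 (u,v))) (snd (Phi 1 (u,v))) * V u v * ((u - v) / (4 * sqrt (1+u) * sqrt (1+v)))"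
      unfolding f_def by (rule fPhi[OF _ zl V_def]) simp
    have t2: "f (Phi (-1) (u,v)) * Jac u v = Q n k u v * sym_mono a b (fst (Phi (-1) (u,v))) (snd (Phi (-1) (u,v))) * V u v * ((u - v) / (4 * sqrt (1+u) * sqrt (1+v)))"
      unfolding f_def by (rule fPhi[OF _ zl V_def]) simp
    have s2: "sym_mono a b (fst (Phi (-1) (u,v))) (snd (Phi (-1) (u,v))) = (-1)^(a+b) * sym_mono a b (fst (Phi 1 (u,v))) (snd (Phi 1 (u,v)))"
      by (simp only: Phi_m1[of "(u,v)"] fst_conv snd_conv sym_neg_flip)
    have pos: "0 < 1 + u" "0 < 1 + v" using zl by (auto simp: Lambda_def)
    have w: "wQ u v = V u v * (u - v) / (sqrt (1+u) * sqrt (1+v))"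
      unfolding wQ_def using powr_half(1)[OF pos(1)] powr_half(1)[OF pos(2)] by simp
    have sp: "sqrt (1+u) > 0" "sqrt (1+v) > 0" using pos by auto
    show ?thesis unfolding uv fst_conv snd_conv t1 t2 s2 w using sp by (simp add: field_simps)
  qed
  show ?thesis
  proof (cases "even (a + b)")
    case True
    have lw': "low (n + k + (a+b) mod 2) (n - k) (a, b)" using lw True by simp
    obtain H where H: "spn (low n k) H"
      "\<forall>x y. \<bar>x\<bar> \<le> 1 \<longrightarrow> \<bar>y\<bar> \<le> 1 \<longrightarrow> sym_mono a b x y = (x+y)^((a+b) mod 2) * H (xp x y) (xm x y)"
      using TRI'[OF kn lw'] by blast
    have "(LINT z:Lambda|lborel. f z) = 0"
    proof (rule orth_core[OF _ _ Q_orth kn momQ H(1), of f "1/2"])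
      show "set_integrable lborel Lambda f" using fi unfolding f_def .
      fix z assume z: "z \<in> Lambda"
      obtain u v where uv: "z = (u,v)" by fastforce
      have zl: "(u,v) \<in> Lambda" using z uv by simp
      have P1: "Phi 1 (u,v) \<in> Lambda" "xp (fst (Phi 1 (u,v))) (snd (Phi 1 (u,v))) = u"
        "xm (fst (Phi 1 (u,v))) (snd (Phi 1 (u,v))) = v" using Phi_props[of 1 u v] zl by auto
      have sq: "\<bar>fst (Phi 1 (u,v))\<bar> \<le> 1" "\<bar>snd (Phi 1 (u,v))\<bar> \<le> 1"
        using in_sq[of "fst (Phi 1 (u,v))" "snd (Phi 1 (u,v))"] P1(1) by auto
      have sH: "sym_mono a b (fst (Phi 1 (u,v))) (snd (Phi 1 (u,v))) = H u v"
        using H(2) sq P1(2,3) True by simp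
      show "f (Phi 1 z) * Jac (fst z) (snd z) + f (Phi (-1) z) * Jac (fst z) (snd z)
        = 1/2 * (Q n k (fst z) (snd z) * H (fst z) (snd z) *
           ((1 + fst z) powr (-1/2) * (1 + snd z) powr (-1/2) * V (fst z) (snd z) * (fst z - snd z)))"
        using base[OF z] True unfolding uv fst_conv snd_conv sH wQ_def by (simp add: mult.assoc)
    qed
    then show ?thesis unfolding f_def .
  next
    case False
    have "(LINT z:Lambda|lborel. f z) = 0"
    proof (rule orth_core[OF _ _ Q_orth kn momQ spn_zero, of f 0])
      show "set_integrable lborel Lambda f" using fi unfolding f_def .
      fix z assume z: "z \<in> Lambda"
      show "f (Phi 1 z) * Jac (fst z) (snd z) + f (Phi (-1) z) * Jac (fst z) (snd z)
        = 0 * (Q n k (fst z) (snd z) * 0 *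
           ((1 + fst z) powr (-1/2) * (1 + snd z) powr (-1/2) * V (fst z) (snd z) * (fst z - snd z)))"
        using base[OF z] False by simp
    qed
    then show ?thesis unfolding f_def .
  qed
qed

lemma orthR:
  fixes W V :: "real \<Rightarrow> real \<Rightarrow> real" and R :: "nat \<Rightarrow> nat \<Rightarrow> real \<Rightarrow> real \<Rightarrow> real"
  assumes V_def: "\<forall>(x, y) \<in> Lambda. V (xp x y) (xm x y) = W x y"
    and momR: "moments_finite (\<lambda>x y. (1 + x) powr (1/2) * (1 + y) powr (1/2) * V x y * (x - y))"
    and R_orth: "dominance_orthogonal (\<lambda>x y. (1 + x) powr (1/2) * (1 + y) powr (1/2) * V x y * (x - y)) R"
    and kn: "k \<le> n" and lw: "low (n + k + 1) (n - k) (a, b)"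
    and fi: "set_integrable lborel Lambda (\<lambda>z. R n k (xp (fst z) (snd z)) (xm (fst z) (snd z))
               * ((fst z + snd z) * sym_mono a b (fst z) (snd z)) * (W (fst z) (snd z) * (fst z - snd z)))"
  shows "(LINT z:Lambda|lborel. R n k (xp (fst z) (snd z)) (xm (fst z) (snd z))
               * ((fst z + snd z) * sym_mono a b (fst z) (snd z)) * (W (fst z) (snd z) * (fst z - snd z))) = 0"
proof -
  define wR where "wR = (\<lambda>x y. (1 + x) powr (1/2) * (1 + y) powr (1/2) * V x y * (x - y))"
  define f where "f = (\<lambda>z. R n k (xp (fst z) (snd z)) (xm (fst z) (snd z))
               * ((fst z + snd z) * sym_mono a b (fst z) (snd z)) * (W (fst z) (snd z) * (fst z - snd z)))"
  have base: "f (Phi 1 z) * Jac (fst z) (snd z) + f (Phi (-1) z) * Jac (fst z) (snd z)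
      = (1 - (-1)^(a+b)) / 4 * (R n k (fst z) (snd z) * ((fst (Phi 1 z) + snd (Phi 1 z)) * sym_mono a b (fst (Phi 1 z)) (snd (Phi 1 z)))
         * V (fst z) (snd z) * (fst z - snd z) / (sqrt (1 + fst z) * sqrt (1 + snd z)))"
    if z: "z \<in> Lambda" for z
  proof -
    obtain u v where uv: "z = (u,v)" by fastforce
    have zl: "(u,v) \<in> Lambda" using z uv by simp
    have t1: "f (Phi 1 (u,v)) * Jac u v = R n k u v * ((fst (Phi 1 (u,v)) + snd (Phi 1 (u,v))) * sym_mono a b (fst (Phi 1 (u,v))) (snd (Phi 1 (u,v)))) * V u v * ((u - v) / (4 * sqrt (1+u) * sqrt (1+v)))"
      unfolding f_def by (rule fPhi[OF _ zl V_def]) simp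
    have t2: "f (Phi (-1) (u,v)) * Jac u v = R n k u v * ((fst (Phi (-1) (u,v)) + snd (Phi (-1) (u,v))) * sym_mono a b (fst (Phi (-1) (u,v))) (snd (Phi (-1) (u,v)))) * V u v * ((u - v) / (4 * sqrt (1+u) * sqrt (1+v)))"
      unfolding f_def by (rule fPhi[OF _ zl V_def]) simp
    have s2: "(fst (Phi (-1) (u,v)) + snd (Phi (-1) (u,v))) * sym_mono a b (fst (Phi (-1) (u,v))) (snd (Phi (-1) (u,v)))
      = - ((-1)^(a+b) * ((fst (Phi 1 (u,v)) + snd (Phi 1 (u,v))) * sym_mono a b (fst (Phi 1 (u,v))) (snd (Phi 1 (u,v)))))"
      by (simp only: Phi_m1[of "(u,v)"] fst_conv snd_conv sym_neg_flip) (simp add: algebra_simps)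
    have pos: "0 < 1 + u" "0 < 1 + v" using zl by (auto simp: Lambda_def)
    have sp: "sqrt (1+u) > 0" "sqrt (1+v) > 0" using pos by auto
    show ?thesis unfolding uv fst_conv snd_conv t1 t2 s2 using sp by (simp add: field_simps)
  qed
  show ?thesis
  proof (cases "odd (a + b)")
    case True
    have m2': "(a+b) mod 2 = 1" using True by presburger
    have lw': "low (n + k + (a+b) mod 2) (n - k) (a, b)" unfolding m2' using lw .
    obtain H where H: "spn (low n k) H"
      "\<forall>x y. \<bar>x\<bar> \<le> 1 \<longrightarrow> \<bar>y\<bar> \<le> 1 \<longrightarrow> sym_mono a b x y = (x+y)^((a+b) mod 2) * H (xp x y) (xm x y)"
      using TRI'[OF kn lw'] by blast
    have "(LINT z:Lambda|lborel. f z) = 0"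
    proof (rule orth_core[OF _ _ R_orth kn momR H(1), of f "1/2"])
      show "set_integrable lborel Lambda f" using fi unfolding f_def .
      fix z assume z: "z \<in> Lambda"
      obtain u v where uv: "z = (u,v)" by fastforce
      have zl: "(u,v) \<in> Lambda" using z uv by simp
      have P1: "Phi 1 (u,v) \<in> Lambda" "xp (fst (Phi 1 (u,v))) (snd (Phi 1 (u,v))) = u"
        "xm (fst (Phi 1 (u,v))) (snd (Phi 1 (u,v))) = v"
        "fst (Phi 1 (u,v)) + snd (Phi 1 (u,v)) = sqrt (1+u) * sqrt (1+v)" using Phi_props[of 1 u v] zl by auto
      have sq: "\<bar>fst (Phi 1 (u,v))\<bar> \<le> 1" "\<bar>snd (Phi 1 (u,v))\<bar> \<le> 1"
        using in_sq[of "fst (Phi 1 (u,v))" "snd (Phi 1 (u,v))"] P1(1) by auto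
      have m2: "(a+b) mod 2 = 1" using m2' .
      have sH: "sym_mono a b (fst (Phi 1 (u,v))) (snd (Phi 1 (u,v))) = sqrt (1+u) * sqrt (1+v) * H u v"
        using H(2) sq P1(2,3,4) m2 by simp
      have pos: "0 < 1 + u" "0 < 1 + v" using zl by (auto simp: Lambda_def)
      have sp: "sqrt (1+u) > 0" "sqrt (1+v) > 0" using pos by auto
      have ww: "(1 + u) powr (1/2) = sqrt (1+u)" "(1 + v) powr (1/2) = sqrt (1+v)"
        using powr_half(2) pos by auto
      have e: "(1 - (-1::real)^(a+b)) = 2" using True by simp
      show "f (Phi 1 z) * Jac (fst z) (snd z) + f (Phi (-1) z) * Jac (fst z) (snd z)
        = 1/2 * (R n k (fst z) (snd z) * H (fst z) (snd z) *
           ((1 + fst z) powr (1/2) * (1 + snd z) powr (1/2) * V (fst z) (snd z) * (fst z - snd z)))"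
      proof -
        define S where "S = sqrt (1+u) * sqrt (1+v)"
        have S: "S > 0" using sp by (simp add: S_def)
        have ww': "(1+u) powr (1/2) * (1+v) powr (1/2) * V u v * (u - v) = S * V u v * (u - v)"
          unfolding ww S_def ..
        have b: "f (Phi 1 (u,v)) * Jac u v + f (Phi (-1) (u,v)) * Jac u v
          = 2 / 4 * (R n k u v * (S * (S * H u v)) * V u v * (u - v) / S)"
          using base[OF z] unfolding uv fst_conv snd_conv sH P1(4) e S_def[symmetric] by (simp add: mult.assoc)
        also have "\<dots> = 1/2 * (R n k u v * H u v * (S * V u v * (u - v)))" using S by (simp add: field_simps)
        finally show ?thesis unfolding uv fst_conv snd_conv ww' .
      qed
    qed
    then show ?thesis unfolding f_def .
  next
    case False
    have "(LINT z:Lambda|lborel. f z) = 0"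
    proof (rule orth_core[OF _ _ R_orth kn momR spn_zero, of f 0])
      show "set_integrable lborel Lambda f" using fi unfolding f_def .
      fix z assume z: "z \<in> Lambda"
      show "f (Phi 1 z) * Jac (fst z) (snd z) + f (Phi (-1) z) * Jac (fst z) (snd z)
        = 0 * (R n k (fst z) (snd z) * 0 *
           ((1 + fst z) powr (1/2) * (1 + snd z) powr (1/2) * V (fst z) (snd z) * (fst z - snd z)))"
        using base[OF z] False by simp
    qed
    then show ?thesis unfolding f_def .
  qed
qed

lemma FpR:
  assumes r: "r \<le> 1" and kn: "k \<le> n"
    and F: "\<And>x y. F x y = (\<Sum>(m, l) \<in> Iset n k. b (m, l) * Ep r m l x y)"
  shows "\<exists>c gF. spn (low (n+k+r) (n-k)) gF \<and> (\<forall>x y. F x y = c * sym_mono (n+k+r) (n-k) x y + gF x y)"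
proof -
  have nk: "(n,k) \<in> Iset n k" using kn by (simp add: Iset_def dom_le_def)
  have Fs: "\<And>x y. F x y = b (n,k) * Ep r n k x y + (\<Sum>(m, l) \<in> Iset n k - {(n,k)}. b (m, l) * Ep r m l x y)"
    by (rule repr_split[OF nk F])
  obtain c0 g0 where cg: "spn (lowp (n+k+r) (n-k)) g0" "\<And>x y. Ep r n k x y = c0 * sym_mono (n+k+r) (n-k) x y + g0 x y"
    using Rt_Ep[OF kn r] unfolding Rt_def by blast
  have g0: "spn (low (n+k+r) (n-k)) g0" by (rule spn_mono[OF cg(1)]) (simp add: lowp_def)
  have rest: "spn (low (n+k+r) (n-k)) (\<lambda>x y. \<Sum>p \<in> Iset n k - {(n,k)}. (\<lambda>(m,l) x y. b (m, l) * Ep r m l x y) p x y)"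
  proof (rule spn_sum)
    show "finite (Iset n k - {(n,k)})" using Iset_finite by simp
    fix p assume p: "p \<in> Iset n k - {(n,k)}"
    obtain m l where ml: "p = (m,l)" by fastforce
    have h: "l \<le> m" "m \<le> n" "m + l \<le> n + k" "(m,l) \<noteq> (n,k)" using p ml by (auto simp: Iset_def dom_le_def)
    have "spn (low (n+k+r) (n-k)) (Ep r m l)"
    proof (rule Rt_lowspn[OF Rt_Ep[OF h(1) r]])
      show "low (n + k + r) (n - k) q" if "lowp (m + l + r) (m - l) q" for q
        using that h kn unfolding lowp_def low_def by auto
      show "low (n + k + r) (n - k) (m + l + r, m - l)"
        using h kn unfolding low_def by auto
    qed
    then show "spn (low (n+k+r) (n-k)) ((\<lambda>(m,l) x y. b (m, l) * Ep r m l x y) p)"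
      unfolding ml by (simp add: spn_scale)
  qed
  have "spn (low (n+k+r) (n-k)) (\<lambda>x y. b (n,k) * g0 x y + (\<Sum>p \<in> Iset n k - {(n,k)}. (\<lambda>(m,l) x y. b (m, l) * Ep r m l x y) p x y))"
    by (rule spn_add[OF spn_scale[OF g0] rest])
  then show ?thesis using Fs cg(2)
    by (intro exI[of _ "b (n,k) * c0"] exI[of _ "\<lambda>x y. b (n,k) * g0 x y + (\<Sum>p \<in> Iset n k - {(n,k)}. (\<lambda>(m,l) x y. b (m, l) * Ep r m l x y) p x y)"])
       (auto simp: algebra_simps case_prod_beta)
qed

lemma fin:
  assumes P_orth: "dominance_orthogonal w P" and w: "moments_finite w"
    and wpos: "\<And>z. z \<in> Lambda \<Longrightarrow> w (fst z) (snd z) > 0"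
    and r: "r \<le> 1" and kn: "k \<le> n"
    and F: "\<And>x y. F x y = (\<Sum>(m, l) \<in> Iset n k. b (m, l) * Ep r m l x y)"
    and oF: "\<And>a b. low (n+k+r) (n-k) (a,b) \<Longrightarrow> (LINT z:Lambda|lborel. F (fst z) (snd z) * sym_mono a b (fst z) (snd z) * w (fst z) (snd z)) = 0"
  shows "\<exists>c. \<forall>z. z \<in> Lambda \<or> z = (1,1) \<longrightarrow> F (fst z) (snd z) = c * P (n+k+r) (n-k) (fst z) (snd z)"
proof -
  obtain c gF where cF: "spn (low (n+k+r) (n-k)) gF" "\<And>x y. F x y = c * sym_mono (n+k+r) (n-k) x y + gF x y"
    using FpR[OF r kn F] by blast
  have KN: "n - k \<le> n + k + r" by simp
  obtain bP gP where cP: "bP \<noteq> 0" "spn (low (n+k+r) (n-k)) gP" "\<And>x y. P (n+k+r) (n-k) x y = bP * sym_mono (n+k+r) (n-k) x y + gP x y"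
    using dom_orth_repr[OF P_orth KN] by blast
  have oP: "\<And>a b. low (n+k+r) (n-k) (a,b) \<Longrightarrow> (LINT z:Lambda|lborel. P (n+k+r) (n-k) (fst z) (snd z) * sym_mono a b (fst z) (snd z) * w (fst z) (snd z)) = 0"
  proof -
    fix a b assume "low (n+k+r) (n-k) (a,b)"
    then have "spn (low (n+k+r) (n-k)) (sym_mono a b)" using spn_gen[of "low (n+k+r) (n-k)" a b 1] by simp
    then show "(LINT z:Lambda|lborel. P (n+k+r) (n-k) (fst z) (snd z) * sym_mono a b (fst z) (snd z) * w (fst z) (snd z)) = 0"
      by (rule orth_ext[OF P_orth KN w])
  qed
  show ?thesis using uniq[OF w wpos cF(2) cF(1) cP(3) cP(2) cP(1) oF oP] by blast
qed

lemma xp11: "xp 1 1 = 1" "xm 1 1 = 1" by (simp_all add: xp_def xm_def)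

lemma get_repr:
  assumes "dominance_orthogonal w Q" "k \<le> n"
  shows "\<exists>b. \<forall>x y. Q n k x y = (\<Sum>(m, l) \<in> Iset n k. b (m, l) * sym_mono m l x y)"
  using assms unfolding dominance_orthogonal_def Iset_def by blast

lemma ident:
  assumes "\<And>x y. Q x y = (\<Sum>(m, l) \<in> Iset n k. b (m, l) * sym_mono m l x y)"
    and "\<bar>x\<bar> \<le> 1" "\<bar>y\<bar> \<le> 1"
  shows "(x + y)^r * Q (xp x y) (xm x y) = (\<Sum>(m, l) \<in> Iset n k. b (m, l) * Ep r m l x y)"
proof -
  have "(x + y)^r * Q (xp x y) (xm x y) = (\<Sum>(m, l) \<in> Iset n k. b (m, l) * ((x + y)^r * sym_mono m l (xp x y) (xm x y)))"
    unfolding assms(1) sum_distrib_left by (rule sum.cong) (auto simp: algebra_simps)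
  also have "\<dots> = (\<Sum>(m, l) \<in> Iset n k. b (m, l) * Ep r m l x y)"
    by (rule sum.cong) (auto simp: Iset_def Ep_ident[OF assms(2,3)])
  finally show ?thesis .
qed

lemma final_div:
  fixes F P :: "real \<Rightarrow> real \<Rightarrow> real" and c :: real
  assumes "\<forall>z. z \<in> Lambda \<or> z = (1,1) \<longrightarrow> F (fst z) (snd z) = c * P (fst z) (snd z)"
    and "(x, y) \<in> Lambda" and "F 1 1 \<noteq> 0"
  shows "F x y / F 1 1 = P x y / P 1 1"
proof -
  have e1: "F x y = c * P x y" using assms(1,2) by (metis fst_conv snd_conv)
  have e2: "F 1 1 = c * P 1 1" using assms(1) by (metis fst_conv snd_conv)
  have "c \<noteq> 0" "P 1 1 \<noteq> 0" using assms(3) e2 by auto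
  then show ?thesis unfolding e1 e2 by simp
qed

theorem proposition3p3:
  fixes W V :: "real \<Rightarrow> real \<Rightarrow> real"
    and P Q R :: "nat \<Rightarrow> nat \<Rightarrow> real \<Rightarrow> real \<Rightarrow> real"
  assumes W_pos: "\<forall>(x, y) \<in> Lambda. W x y > 0"
    and W_sym: "\<forall>(x, y) \<in> Lambda. W x y = W (- y) (- x)"
    and V_def: "\<forall>(x, y) \<in> Lambda.
        V (x * y + sqrt (1 - x ^ 2) * sqrt (1 - y ^ 2))
          (x * y - sqrt (1 - x ^ 2) * sqrt (1 - y ^ 2)) = W x y"
    and momP: "moments_finite (\<lambda>x y. W x y * (x - y))"
    and momQ: "moments_finite (\<lambda>x y. (1 + x) powr (-1/2) * (1 + y) powr (-1/2) * V x y * (x - y))"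
    and momR: "moments_finite (\<lambda>x y. (1 + x) powr (1/2) * (1 + y) powr (1/2) * V x y * (x - y))"
    and P_orth: "dominance_orthogonal (\<lambda>x y. W x y * (x - y)) P"
    and Q_orth: "dominance_orthogonal
        (\<lambda>x y. (1 + x) powr (-1/2) * (1 + y) powr (-1/2) * V x y * (x - y)) Q"
    and R_orth: "dominance_orthogonal
        (\<lambda>x y. (1 + x) powr (1/2) * (1 + y) powr (1/2) * V x y * (x - y)) R"
    and P_one: "\<forall>n k. k \<le> n \<longrightarrow> P n k 1 1 \<noteq> 0"
    and Q_one: "\<forall>n k. k \<le> n \<longrightarrow> Q n k 1 1 \<noteq> 0"
    and R_one: "\<forall>n k. k \<le> n \<longrightarrow> R n k 1 1 \<noteq> 0"
  shows "\<forall>n k. k \<le> n \<longrightarrow> (\<forall>(x, y) \<in> Lambda.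
      Q n k (x * y + sqrt (1 - x ^ 2) * sqrt (1 - y ^ 2))
            (x * y - sqrt (1 - x ^ 2) * sqrt (1 - y ^ 2)) / Q n k 1 1
        = P (n + k) (n - k) x y / P (n + k) (n - k) 1 1
    \<and> (x + y) * R n k (x * y + sqrt (1 - x ^ 2) * sqrt (1 - y ^ 2))
            (x * y - sqrt (1 - x ^ 2) * sqrt (1 - y ^ 2)) / (2 * R n k 1 1)
        = P (n + k + 1) (n - k) x y / P (n + k + 1) (n - k) 1 1)"
proof (intro allI impI ballI)
  fix n k :: nat and z assume kn: "k \<le> n" and zL: "z \<in> Lambda"
  obtain x y where xy: "z = (x,y)" by fastforce
  have xyL: "(x,y) \<in> Lambda" using zL xy by simp
  have Vd: "\<forall>(x, y) \<in> Lambda. V (xp x y) (xm x y) = W x y" using V_def by (simp add: xp_def xm_def)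
  have wpos: "\<And>z. z \<in> Lambda \<Longrightarrow> W (fst z) (snd z) * (fst z - snd z) > 0"
    using W_pos by (auto simp: Lambda_def)
  obtain bQ where bQ: "\<And>x y. Q n k x y = (\<Sum>(m, l) \<in> Iset n k. bQ (m, l) * sym_mono m l x y)"
    using get_repr[OF Q_orth kn] by blast
  define F where "F = (\<lambda>x y. \<Sum>(m, l) \<in> Iset n k. bQ (m, l) * Ep 0 m l x y)"
  have idQ: "\<And>x y. \<bar>x\<bar> \<le> 1 \<Longrightarrow> \<bar>y\<bar> \<le> 1 \<Longrightarrow> Q n k (xp x y) (xm x y) = F x y"
    using ident[OF bQ, where r=0] unfolding F_def by simp
  have FT: "spnT F"
  proof -
    obtain c gF where "spn (low (n+k+0) (n-k)) gF" "\<forall>x y. F x y = c * sym_mono (n+k+0) (n-k) x y + gF x y"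
      using FpR[of 0 k n F bQ] kn unfolding F_def by auto
    then show ?thesis by (intro spn_ext[OF spn_add[OF spnT_sym[THEN spn_scale] spnT_any]]) auto
  qed
  have oQ: "(LINT z:Lambda|lborel. F (fst z) (snd z) * sym_mono a b (fst z) (snd z) * (W (fst z) (snd z) * (fst z - snd z))) = 0"
    if lw: "low (n+k+0) (n-k) (a,b)" for a b
  proof -
    have cong: "\<And>z. z \<in> Lambda \<Longrightarrow> F (fst z) (snd z) * sym_mono a b (fst z) (snd z) * (W (fst z) (snd z) * (fst z - snd z))
      = Q n k (xp (fst z) (snd z)) (xm (fst z) (snd z)) * sym_mono a b (fst z) (snd z) * (W (fst z) (snd z) * (fst z - snd z))"
      using idQ in_sq by (metis prod.collapse)
    have i0: "set_integrable lborel Lambda (\<lambda>z. F (fst z) (snd z) * sym_mono a b (fst z) (snd z) * (W (fst z) (snd z) * (fst z - snd z)))"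
      using poly_int[OF momP spnT_mult[OF FT spnT_sym]] by simp
    have fi: "set_integrable lborel Lambda (\<lambda>z. Q n k (xp (fst z) (snd z)) (xm (fst z) (snd z))
               * sym_mono a b (fst z) (snd z) * (W (fst z) (snd z) * (fst z - snd z)))"
      using i0 by (rule iffD1[OF set_integrable_cong[OF refl refl cong], rotated])
    have "(LINT z:Lambda|lborel. F (fst z) (snd z) * sym_mono a b (fst z) (snd z) * (W (fst z) (snd z) * (fst z - snd z)))
      = (LINT z:Lambda|lborel. Q n k (xp (fst z) (snd z)) (xm (fst z) (snd z)) * sym_mono a b (fst z) (snd z) * (W (fst z) (snd z) * (fst z - snd z)))"
      by (rule set_lebesgue_integral_cong) (use cong Lambda_borel in auto)
    also have "\<dots> = 0" by (rule orthQ[OF Vd momQ Q_orth kn _ fi]) (use lw in simp)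
    finally show ?thesis .
  qed
  obtain cQ where cQ: "\<forall>z. z \<in> Lambda \<or> z = (1,1) \<longrightarrow> F (fst z) (snd z) = cQ * P (n+k+0) (n-k) (fst z) (snd z)"
    using fin[OF P_orth momP wpos _ kn, of 0 F bQ] oQ unfolding F_def by auto
  have F11: "F 1 1 = Q n k 1 1" using idQ[of 1 1] xp11 by simp
  have resQ: "Q n k (xp x y) (xm x y) / Q n k 1 1 = P (n + k) (n - k) x y / P (n + k) (n - k) 1 1"
    using final_div[of F cQ "P (n+k) (n-k)" x y] cQ xyL F11 Q_one kn idQ in_sq[OF xyL] by simp
  obtain bR where bR: "\<And>x y. R n k x y = (\<Sum>(m, l) \<in> Iset n k. bR (m, l) * sym_mono m l x y)"
    using get_repr[OF R_orth kn] by blast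
  define G where "G = (\<lambda>x y. \<Sum>(m, l) \<in> Iset n k. bR (m, l) * Ep 1 m l x y)"
  have idR: "\<And>x y. \<bar>x\<bar> \<le> 1 \<Longrightarrow> \<bar>y\<bar> \<le> 1 \<Longrightarrow> (x + y) * R n k (xp x y) (xm x y) = G x y"
    using ident[OF bR, where r=1] unfolding G_def by simp
  have GT: "spnT G"
  proof -
    obtain c gF where "spn (low (n+k+1) (n-k)) gF" "\<forall>x y. G x y = c * sym_mono (n+k+1) (n-k) x y + gF x y"
      using FpR[of 1 k n G bR] kn unfolding G_def by auto
    then show ?thesis by (intro spn_ext[OF spn_add[OF spnT_sym[THEN spn_scale] spnT_any]]) auto
  qed
  have oR: "(LINT z:Lambda|lborel. G (fst z) (snd z) * sym_mono a b (fst z) (snd z) * (W (fst z) (snd z) * (fst z - snd z))) = 0"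
    if lw: "low (n+k+1) (n-k) (a,b)" for a b
  proof -
    have cong: "\<And>z. z \<in> Lambda \<Longrightarrow> G (fst z) (snd z) * sym_mono a b (fst z) (snd z) * (W (fst z) (snd z) * (fst z - snd z))
      = R n k (xp (fst z) (snd z)) (xm (fst z) (snd z)) * ((fst z + snd z) * sym_mono a b (fst z) (snd z)) * (W (fst z) (snd z) * (fst z - snd z))"
    proof -
      fix z :: "real \<times> real" assume "z \<in> Lambda"
      then have "G (fst z) (snd z) = (fst z + snd z) * R n k (xp (fst z) (snd z)) (xm (fst z) (snd z))"
        using idR in_sq by (metis prod.collapse)
      then show "G (fst z) (snd z) * sym_mono a b (fst z) (snd z) * (W (fst z) (snd z) * (fst z - snd z))
      = R n k (xp (fst z) (snd z)) (xm (fst z) (snd z)) * ((fst z + snd z) * sym_mono a b (fst z) (snd z)) * (W (fst z) (snd z) * (fst z - snd z))"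
        by (simp add: ac_simps)
    qed
    have i0: "set_integrable lborel Lambda (\<lambda>z. G (fst z) (snd z) * sym_mono a b (fst z) (snd z) * (W (fst z) (snd z) * (fst z - snd z)))"
      using poly_int[OF momP spnT_mult[OF GT spnT_sym]] by simp
    have fi: "set_integrable lborel Lambda (\<lambda>z. R n k (xp (fst z) (snd z)) (xm (fst z) (snd z))
               * ((fst z + snd z) * sym_mono a b (fst z) (snd z)) * (W (fst z) (snd z) * (fst z - snd z)))"
      using i0 by (rule iffD1[OF set_integrable_cong[OF refl refl cong], rotated])
    have "(LINT z:Lambda|lborel. G (fst z) (snd z) * sym_mono a b (fst z) (snd z) * (W (fst z) (snd z) * (fst z - snd z)))
      = (LINT z:Lambda|lborel. R n k (xp (fst z) (snd z)) (xm (fst z) (snd z)) * ((fst z + snd z) * sym_mono a b (fst z) (snd z)) * (W (fst z) (snd z) * (fst z - snd z)))"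
      by (rule set_lebesgue_integral_cong) (use cong Lambda_borel in auto)
    also have "\<dots> = 0" by (rule orthR[OF Vd momR R_orth kn lw fi])
    finally show ?thesis .
  qed
  obtain cR where cR: "\<forall>z. z \<in> Lambda \<or> z = (1,1) \<longrightarrow> G (fst z) (snd z) = cR * P (n+k+1) (n-k) (fst z) (snd z)"
    using fin[OF P_orth momP wpos _ kn, of 1 G bR] oR unfolding G_def by auto
  have G11: "G 1 1 = 2 * R n k 1 1" using idR[of 1 1] xp11 by simp
  have resR: "G x y / G 1 1 = P (n + k + 1) (n - k) x y / P (n + k + 1) (n - k) 1 1"
    using final_div[of G cR "P (n+k+1) (n-k)" x y] cR xyL G11 R_one kn by simp
  have resR': "(x + y) * R n k (xp x y) (xm x y) / (2 * R n k 1 1) = P (n + k + 1) (n - k) x y / P (n + k + 1) (n - k) 1 1"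
    using resR idR[OF in_sq[OF xyL, THEN conjunct1] in_sq[OF xyL, THEN conjunct2]] G11 by simp
  show "(case z of (x, y) \<Rightarrow>
      Q n k (x * y + sqrt (1 - x ^ 2) * sqrt (1 - y ^ 2))
            (x * y - sqrt (1 - x ^ 2) * sqrt (1 - y ^ 2)) / Q n k 1 1
        = P (n + k) (n - k) x y / P (n + k) (n - k) 1 1
    \<and> (x + y) * R n k (x * y + sqrt (1 - x ^ 2) * sqrt (1 - y ^ 2))
            (x * y - sqrt (1 - x ^ 2) * sqrt (1 - y ^ 2)) / (2 * R n k 1 1)
        = P (n + k + 1) (n - k) x y / P (n + k + 1) (n - k) 1 1)"
    using resQ resR' unfolding xy xp_def xm_def by simp
qed

end
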